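(* Let $\mu>0$ and $A=3\big(\frac{\pi\mu}{2}\big)^{2/3}$, $B=3\big(\frac{\mu^2}{4\pi}\big)^{2/3}$. For every $\delta\in(0,\tfrac16)$, as $N\to\infty$, $$Z_N^{(\mu)}=(e^\mu-1)\sqrt{\frac{\pi}{B}}\,\frac{\mu}{2}\,e^{-AN^{1/3}}N^{-5/6}4^N\big(1+O(N^{-\delta})\big).$$
   Context: $Z_N^{(\mu)}=\sum_{T:|T|=N}e^{-\mu h(T)}$, the sum over rooted planar trees (root of degree 1) with $N$ edges, $h(T)$ the height (maximal distance of a vertex from the root). *)

theory Defs
  imports "HOL-Analysis.Analysis" "HOL-Library.Landau_Symbols"
begin

datatype ptree = Node "ptree list"

fun edges :: "ptree \<Rightarrow> nat" where
  "edges (Node ts) = sum_list (map (\<lambda>t. Suc (edges t)) ts)"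

fun height :: "ptree \<Rightarrow> nat" where
  "height (Node ts) = Max (insert 0 (set (map (\<lambda>t. Suc (height t)) ts)))"

definition planted_trees :: "nat \<Rightarrow> ptree set" where
  "planted_trees N = {T. (\<exists>t. T = Node [t]) \<and> edges T = N}"

definition Z :: "real \<Rightarrow> nat \<Rightarrow> real" where
  "Z \<mu> N = (\<Sum>T\<in>planted_trees N. exp (- \<mu> * real (height T)))"

end

theory Submission
  imports Defs "HOL-Probability.Distributions" "HOL-Real_Asymp.Real_Asymp"
begin

fun fits :: "nat \<Rightarrow> nat \<Rightarrow> ptree list \<Rightarrow> bool" where
  "fits k i [] = False"
| "fits k i (t # ts) = (height t + i \<le> k \<and> (if ts = [] then i = 0 else 0 < i \<and> fits k (i - 1) ts))"

definition wt :: "nat \<Rightarrow> ptree list \<Rightarrow> nat" where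
  "wt i ts = 2 * sum_list (map edges ts) + i"

definition OS :: "nat \<Rightarrow> nat \<Rightarrow> nat \<Rightarrow> ptree list set" where
  "OS k L i = {ts. fits k i ts \<and> wt i ts = L}"

lemma height_Node_Nil[simp]: "height (Node []) = 0" by simp

lemma height_Node_Cons: "height (Node (c # cs)) = max (Suc (height c)) (height (Node cs))"
proof -
  have "height (Node (c # cs)) = Max (insert (Suc (height c)) (insert 0 ((\<lambda>t. Suc (height t)) ` set cs)))"
    by (simp add: insert_commute)
  also have "\<dots> = max (Suc (height c)) (Max (insert 0 ((\<lambda>t. Suc (height t)) ` set cs)))"
    by (rule Max_insert) auto
  finally show ?thesis by simp
qed

lemma edges_Node_Cons: "edges (Node (c # cs)) = Suc (edges c) + edges (Node cs)"
  by simp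

lemma edges0: "edges t = 0 \<longleftrightarrow> t = Node []"
  by (cases t) (auto)

lemma OS_0: "OS k 0 i = (if i = 0 then {[Node []]} else {})"
proof -
  have "ts \<in> OS k 0 i \<longleftrightarrow> i = 0 \<and> ts = [Node []]" for ts
  proof
    assume "ts \<in> OS k 0 i"
    then have f: "fits k i ts" and w: "wt i ts = 0" by (auto simp: OS_def)
    from w have i0: "i = 0" and e: "\<forall>t\<in>set ts. edges t = 0" by (auto simp: wt_def)
    from f obtain t ts' where ts: "ts = t # ts'" by (cases ts) auto
    with f i0 have "ts' = []" by (auto split: if_splits)
    with ts e edges0 i0 show "i = 0 \<and> ts = [Node []]" by auto
  next
    assume "i = 0 \<and> ts = [Node []]"
    then show "ts \<in> OS k 0 i" by (auto simp: OS_def wt_def)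
  qed
  then show ?thesis by auto
qed

definition f1 :: "ptree list \<Rightarrow> ptree list" where "f1 ts = Node [] # ts"
fun f2 :: "ptree list \<Rightarrow> ptree list" where
  "f2 (c # Node cs # rest) = Node (c # cs) # rest"
| "f2 ts = ts"

lemma fits_nonempty: "fits k i ts \<Longrightarrow> ts \<noteq> []" by (cases ts) auto

lemma fits_Suc_len: "fits k (Suc i) ts \<Longrightarrow> \<exists>c d rest. ts = c # d # rest"
  by (cases ts; cases "tl ts") (auto split: if_splits)

lemma OS_Suc:
  assumes "i \<le> k"
  shows "OS k (Suc L) i = (if 0 < i then f1 ` OS k L (i - 1) else {}) \<union> (if i < k then f2 ` OS k L (Suc i) else {})"
proof (intro set_eqI iffI)
  fix ts assume "ts \<in> OS k (Suc L) i"
  then have f: "fits k i ts" and w: "wt i ts = Suc L" by (auto simp: OS_def)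
  from f obtain t ts' where ts: "ts = t # ts'" by (cases ts) auto
  obtain cs where t: "t = Node cs" by (cases t)
  show "ts \<in> (if 0 < i then f1 ` OS k L (i - 1) else {}) \<union> (if i < k then f2 ` OS k L (Suc i) else {})"
  proof (cases cs)
    case Nil
    have "ts' \<noteq> []"
    proof
      assume "ts' = []" with f w ts t Nil show False by (auto simp: wt_def)
    qed
    with f ts have ip: "0 < i" and f': "fits k (i - 1) ts'" by auto
    have "wt (i - 1) ts' = L" using w ts t Nil ip by (auto simp: wt_def)
    with f' have "ts' \<in> OS k L (i - 1)" by (auto simp: OS_def)
    then show ?thesis using ip ts t Nil by (auto simp: f1_def)
  next
    case (Cons c cs')
    have hc: "height c + Suc i \<le> k" and hcs: "height (Node cs') + i \<le> k"
      using f ts t Cons height_Node_Cons[of c cs'] by auto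
    have ik: "i < k" using hc by simp
    have f'': "fits k (Suc i) (c # Node cs' # ts')"
      using f ts t Cons hc hcs by (auto split: if_splits)
    have "wt (Suc i) (c # Node cs' # ts') = L"
      using w ts t Cons by (simp add: wt_def)
    with f'' have "c # Node cs' # ts' \<in> OS k L (Suc i)" by (auto simp: OS_def)
    moreover have "ts = f2 (c # Node cs' # ts')" using ts t Cons by simp
    ultimately have "ts \<in> f2 ` OS k L (Suc i)" by (rule rev_image_eqI)
    then show ?thesis using ik by simp
  qed
next
  fix ts assume A: "ts \<in> (if 0 < i then f1 ` OS k L (i - 1) else {}) \<union> (if i < k then f2 ` OS k L (Suc i) else {})"
  show "ts \<in> OS k (Suc L) i"
  proof (cases "ts \<in> (if 0 < i then f1 ` OS k L (i - 1) else {})")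
    case True
    then obtain ts' where ip: "0 < i" and ts': "ts' \<in> OS k L (i - 1)" and ts: "ts = Node [] # ts'"
      by (auto simp: f1_def split: if_splits)
    have "ts' \<noteq> []" using ts' fits_nonempty by (auto simp: OS_def)
    then show ?thesis using ts ts' ip assms by (auto simp: OS_def wt_def)
  next
    case False
    with A obtain ts'' where ik: "i < k" and ts'': "ts'' \<in> OS k L (Suc i)" and ts: "ts = f2 ts''"
      by (auto split: if_splits)
    from ts'' have f: "fits k (Suc i) ts''" and w: "wt (Suc i) ts'' = L" by (auto simp: OS_def)
    from fits_Suc_len[OF f] obtain c d rest where e: "ts'' = c # d # rest" by blast
    obtain cs where d: "d = Node cs" by (cases d)
    have fi: "fits k i (d # rest)" and hc: "height c + Suc i \<le> k" using f e by auto
    have hd: "height d + i \<le> k" using fi by simp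
    have "ts = Node (c # cs) # rest" using ts e d by simp
    moreover have "fits k i (Node (c # cs) # rest)"
      using fi hc hd d height_Node_Cons[of c cs] by (auto split: if_splits)
    moreover have "wt i (Node (c # cs) # rest) = Suc L" using w e d by (simp add: wt_def)
    ultimately show ?thesis by (auto simp: OS_def)
  qed
qed

lemma inj_f1: "inj f1" by (auto simp: inj_def f1_def)

lemma inj_on_f2: "inj_on f2 (OS k L (Suc i))"
proof
  fix x y assume x: "x \<in> OS k L (Suc i)" and y: "y \<in> OS k L (Suc i)" and eq: "f2 x = f2 y"
  from x obtain c d rest where ex: "x = c # d # rest" using fits_Suc_len[of k i x] by (auto simp: OS_def)
  from y obtain c' d' rest' where ey: "y = c' # d' # rest'" using fits_Suc_len[of k i y] by (auto simp: OS_def)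
  obtain cs where d: "d = Node cs" by (cases d)
  obtain cs' where d': "d' = Node cs'" by (cases d')
  show "x = y" using eq ex ey d d' by simp
qed

lemma OS_big: "k < i \<Longrightarrow> OS k L i = {}"
proof -
  assume "k < i"
  have "\<not> fits k i ts" for ts using \<open>k < i\<close> by (cases ts) auto
  then show ?thesis by (auto simp: OS_def)
qed

lemma OS_finite: "finite (OS k L i)"
proof (induction L arbitrary: i)
  case 0 then show ?case by (simp add: OS_0)
next
  case (Suc L)
  show ?case
  proof (cases "i \<le> k")
    case True then show ?thesis using Suc by (simp add: OS_Suc)
  next
    case False then show ?thesis by (simp add: OS_big)
  qed
qed

lemma f2_head: "ts \<in> OS k L (Suc i) \<Longrightarrow> \<exists>c cs rest. f2 ts = Node (c # cs) # rest"
proof -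
  assume "ts \<in> OS k L (Suc i)"
  then obtain c d rest where e: "ts = c # d # rest" using fits_Suc_len[of k i ts] by (auto simp: OS_def)
  obtain cs where "d = Node cs" by (cases d)
  then show ?thesis using e by auto
qed

lemma OS_card_Suc:
  assumes "i \<le> k"
  shows "card (OS k (Suc L) i) = (if 0 < i then card (OS k L (i - 1)) else 0) + (if i < k then card (OS k L (Suc i)) else 0)"
proof -
  have disj: "(if 0 < i then f1 ` OS k L (i - 1) else {}) \<inter> (if i < k then f2 ` OS k L (Suc i) else {}) = {}"
  proof -
    have "f1 a \<noteq> f2 b" if "b \<in> OS k L (Suc i)" for a b
      using f2_head[OF that] by (auto simp: f1_def)
    then show ?thesis by auto
  qed
  have c1: "card (if 0 < i then f1 ` OS k L (i - 1) else {}) = (if 0 < i then card (OS k L (i - 1)) else 0)"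
    using inj_f1 by (simp add: card_image inj_on_def)
  have c2: "card (if i < k then f2 ` OS k L (Suc i) else {}) = (if i < k then card (OS k L (Suc i)) else 0)"
    using inj_on_f2 by (simp add: card_image)
  show ?thesis
    unfolding OS_Suc[OF assms] using disj c1 c2 OS_finite
    by (subst card_Un_disjoint) auto
qed

lemma sin_sum_diff: "sin (a + b) - sin (a - b) = 2 * cos a * sin (b::real)"
  by (simp add: sin_add sin_diff)

lemma sin_sum_plus: "sin (a - b) + sin (a + b) = 2 * sin a * cos (b::real)"
  by (simp add: sin_add sin_diff)

lemma cos_telescope:
  "2 * sin (x/2) * (\<Sum>j=1..n. cos (real j * x)) = sin ((2 * real n + 1) * x / 2) - sin (x / 2)"
proof (induction n)
  case 0 then show ?case by simp
next
  case (Suc n)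
  have "2 * sin (x/2) * (\<Sum>j=1..Suc n. cos (real j * x)) =
        2 * sin (x/2) * (\<Sum>j=1..n. cos (real j * x)) + 2 * cos (real (Suc n) * x) * sin (x/2)"
    by (simp add: algebra_simps)
  also have "2 * cos (real (Suc n) * x) * sin (x/2) =
      sin (real (Suc n) * x + x/2) - sin (real (Suc n) * x - x/2)"
    by (rule sin_sum_diff[symmetric])
  also have "real (Suc n) * x + x/2 = (2 * real (Suc n) + 1) * x / 2" by (simp add: field_simps)
  also have "real (Suc n) * x - x/2 = (2 * real n + 1) * x / 2" by (simp add: field_simps)
  finally show ?case using Suc by simp
qed

lemma sin_rpi_minus: "sin (real r * pi - y) = - ((-1)^r * sin y)"
  by (simp add: sin_diff sin_npi cos_npi)

lemma cos_sum:
  assumes M: "M \<ge> 1" and r: "0 < r" "r < 2 * M"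
  shows "(\<Sum>j=1..M-1. cos (real j * (real r * pi / real M))) = - (1 + (-1)^r) / 2"
proof -
  define x where "x = real r * pi / real M"
  have s: "sin (x/2) > 0"
  proof (rule sin_gt_zero)
    show "0 < x/2" using M r by (simp add: x_def)
    have "real r < 2 * real M" using r by linarith
    then have "real r * pi < 2 * real M * pi" by simp
    then show "x/2 < pi" using M by (simp add: x_def field_simps)
  qed
  have eq: "(2 * real (M-1) + 1) * x / 2 = real r * pi - x / 2"
    using M by (simp add: x_def field_simps of_nat_diff)
  have "2 * sin (x/2) * (\<Sum>j=1..M-1. cos (real j * x)) = - ((-1)^r * sin (x/2)) - sin (x/2)"
    using cos_telescope[of x "M-1", unfolded eq] sin_rpi_minus[of r "x/2"] by simp
  then have "2 * sin (x/2) * (\<Sum>j=1..M-1. cos (real j * x)) = 2 * sin (x/2) * (- (1 + (-1)^r) / 2)"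
    by (simp add: algebra_simps)
  then show ?thesis using s by (simp add: x_def)
qed

definition th :: "nat \<Rightarrow> nat \<Rightarrow> real" where "th k j = real j * pi / real (k+2)"

definition Dr :: "nat \<Rightarrow> nat \<Rightarrow> nat \<Rightarrow> real" where
  "Dr k L x = 2 / real (k+2) * (\<Sum>j=1..k+1. sin (th k j) * sin (real x * th k j) * (2 * cos (th k j))^L)"

lemma Dr_zero: "Dr k L 0 = 0" by (simp add: Dr_def)

lemma Dr_top: "Dr k L (k+2) = 0"
proof -
  have "sin (real (k+2) * th k j) = 0" for j
  proof -
    have "real (k+2) * th k j = real j * pi" by (simp add: th_def)
    then show ?thesis by (simp add: sin_npi)
  qed
  then show ?thesis by (simp add: Dr_def)
qed

lemma Dr_step: "1 \<le> x \<Longrightarrow> Dr k (Suc L) x = Dr k L (x - 1) + Dr k L (x + 1)"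
proof -
  assume x: "1 \<le> x"
  have "sin (real x * t) * (2 * cos t) = sin (real (x - 1) * t) + sin (real (x+1) * t)" for t
  proof -
    have "real (x - 1) * t = real x * t - t" "real (x+1) * t = real x * t + t"
      using x by (simp_all add: of_nat_diff algebra_simps)
    then show ?thesis using sin_sum_plus[of "real x * t" t] by simp
  qed
  note h = this
  have "sin (th k j) * sin (real x * th k j) * (2 * cos (th k j))^Suc L =
     sin (th k j) * sin (real (x-1) * th k j) * (2 * cos (th k j))^L +
     sin (th k j) * sin (real (x+1) * th k j) * (2 * cos (th k j))^L" for j
  proof -
    have "sin (th k j) * sin (real x * th k j) * (2 * cos (th k j))^Suc L =
      sin (th k j) * (2 * cos (th k j))^L * (sin (real x * th k j) * (2 * cos (th k j)))"
      by (simp only: power_Suc mult_ac)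
    also have "\<dots> = sin (th k j) * (2 * cos (th k j))^L * (sin (real (x - 1) * th k j) + sin (real (x+1) * th k j))"
      by (subst h) (rule refl)
    finally show ?thesis by (simp only: algebra_simps)
  qed
  then show ?thesis
    by (simp add: Dr_def sum.distrib algebra_simps sum_distrib_left)
qed

lemma Dr_base:
  assumes "i \<le> k"
  shows "Dr k 0 (i + 1) = (if i = 0 then 1 else 0)"
proof -
  define M where "M = k + 2"
  have M1: "M \<ge> 1" by (simp add: M_def)
  have prod: "sin (th k j) * sin (real (i+1) * th k j) =
     (cos (real j * (real i * pi / real M)) - cos (real j * (real (i+2) * pi / real M))) / 2" for j
  proof -
    have "sin (th k j) * sin (real (i+1) * th k j) = (cos (real (i+1) * th k j - th k j) - cos (real (i+1) * th k j + th k j)) / 2"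
      by (simp add: cos_diff cos_add)
    moreover have "real (i+1) * th k j - th k j = real j * (real i * pi / real M)"
    proof -
      have "real (i+1) * th k j - th k j = real i * th k j" by (simp add: algebra_simps)
      then show ?thesis by (simp add: th_def M_def)
    qed
    moreover have "real (i+1) * th k j + th k j = real j * (real (i+2) * pi / real M)"
    proof -
      have "real (i+1) * th k j + th k j = real (i+2) * th k j" by (simp add: algebra_simps)
      then show ?thesis by (simp add: th_def M_def)
    qed
    ultimately show ?thesis by simp
  qed
  have S: "(\<Sum>j=1..k+1. sin (th k j) * sin (real (i+1) * th k j)) =
     ((\<Sum>j=1..M-1. cos (real j * (real i * pi / real M))) - (\<Sum>j=1..M-1. cos (real j * (real (i+2) * pi / real M)))) / 2"
  proof -
    have r: "{1..k+1} = {1..M-1}" by (simp add: M_def)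
    show ?thesis unfolding prod r sum_subtractf[symmetric] sum_divide_distrib by (rule refl)
  qed
  have c2: "(\<Sum>j=1..M-1. cos (real j * (real (i+2) * pi / real M))) = - (1 + (-1)^i) / 2"
    using cos_sum[OF M1, of "i+2"] assms by (simp add: M_def)
  show ?thesis
  proof (cases "i = 0")
    case True
    have "(\<Sum>j=1..M-1. cos (real j * (real i * pi / real M))) = real M - 1"
      using True M1 by (simp add: of_nat_diff)
    then show ?thesis using True S c2 by (simp add: Dr_def M_def field_simps)
  next
    case False
    have "(\<Sum>j=1..M-1. cos (real j * (real i * pi / real M))) = - (1 + (-1)^i) / 2"
      using cos_sum[OF M1, of i] assms False by (simp add: M_def)
    then show ?thesis using False S c2 by (simp add: Dr_def M_def)
  qed
qed

lemma OS_card_Dr: "i \<le> k \<Longrightarrow> real (card (OS k L i)) = Dr k L (i + 1)"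
proof (induction L arbitrary: i)
  case 0 then show ?case using Dr_base[OF 0] by (simp add: OS_0)
next
  case (Suc L)
  have "real (card (OS k (Suc L) i)) =
     (if 0 < i then Dr k L i else 0) + (if i < k then Dr k L (i + 2) else 0)"
    using Suc by (simp add: OS_card_Suc)
  also have "\<dots> = Dr k L i + Dr k L (i + 2)"
    using Suc.prems Dr_zero[of k L] Dr_top[of k L] by (cases "i = 0"; cases "i = k") auto
  also have "\<dots> = Dr k (Suc L) (i + 1)" by (simp add: Dr_step)
  finally show ?case .
qed

definition TS :: "nat \<Rightarrow> nat \<Rightarrow> ptree set" where
  "TS k n = {t. edges t = n \<and> height t \<le> k}"

lemma OS_single: "OS k (2*n) 0 = (\<lambda>t. [t]) ` TS k n"
proof (intro set_eqI iffI)
  fix ts assume "ts \<in> OS k (2*n) 0"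
  then have f: "fits k 0 ts" and w: "wt 0 ts = 2*n" by (auto simp: OS_def)
  from f obtain t ts' where ts: "ts = t # ts'" by (cases ts) auto
  with f have "ts' = []" by (auto split: if_splits)
  with f w ts show "ts \<in> (\<lambda>t. [t]) ` TS k n" by (auto simp: TS_def wt_def)
next
  fix ts assume "ts \<in> (\<lambda>t. [t]) ` TS k n"
  then show "ts \<in> OS k (2*n) 0" by (auto simp: TS_def OS_def wt_def)
qed

lemma TS_finite: "finite (TS k n)"
proof -
  have "finite ((\<lambda>t. [t]) ` TS k n)" using OS_finite[of k "2*n" 0] by (simp add: OS_single)
  then show ?thesis by (rule finite_imageD) (auto simp: inj_on_def)
qed

lemma TS_card: "real (card (TS k n)) = Dr k (2*n) 1"
proof -
  have "card (TS k n) = card (OS k (2*n) 0)"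
    unfolding OS_single by (rule card_image[symmetric]) (auto simp: inj_on_def)
  then show ?thesis using OS_card_Dr[of 0 k "2*n"] by simp
qed

definition Sm :: "nat \<Rightarrow> nat \<Rightarrow> real" where
  "Sm n m = 2 / real m * (\<Sum>j=1..m-1. sin (real j * pi / real m)^2 * cos (real j * pi / real m)^(2*n))"

lemma TS_card_Sm: "real (card (TS k n)) = 4^n * Sm n (k+2)"
proof -
  have p: "(2 * c)^(2*n) = 4^n * c^(2*n)" for c :: real
    by (simp add: power_mult_distrib power_mult)
  have "Dr k (2*n) 1 = 2 / real (k+2) * (\<Sum>j=1..k+1. 4^n * (sin (real j * pi / real (k+2))^2 * cos (real j * pi / real (k+2))^(2*n)))"
    unfolding Dr_def th_def p
    by (simp add: power2_eq_square mult_ac)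
  also have "\<dots> = 4^n * Sm n (k+2)"
    by (simp add: Sm_def sum_distrib_left[symmetric] mult_ac)
  finally show ?thesis using TS_card by simp
qed

lemma height_le_edges: "height t \<le> edges t"
proof (induction t rule: height.induct)
  case (1 ts)
  have "Suc (height t) \<le> edges (Node ts)" if "t \<in> set ts" for t
  proof -
    have "Suc (height t) \<le> Suc (edges t)" using 1 that by simp
    also have "\<dots> \<le> sum_list (map (\<lambda>t. Suc (edges t)) ts)"
      using that by (intro member_le_sum_list) auto
    finally show ?thesis by simp
  qed
  then show ?case by (auto simp: Max_le_iff)
qed

definition Tall :: "nat \<Rightarrow> ptree set" where "Tall n = {t. edges t = n}"

lemma Tall_TS: "Tall n = TS n n"
  using height_le_edges by (auto simp: Tall_def TS_def)

lemma planted_eq: "planted_trees (Suc n) = (\<lambda>t. Node [t]) ` Tall n"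
  by (auto simp: planted_trees_def Tall_def)

lemma height_planted: "height (Node [t]) = Suc (height t)" by simp

lemma Z_Tall: "Z \<mu> (Suc n) = (\<Sum>t\<in>Tall n. exp (- \<mu> * real (Suc (height t))))"
  unfolding Z_def planted_eq
  by (subst sum.reindex) (auto simp: inj_on_def)

lemma tele:
  assumes "h \<le> n"
  shows "(\<Sum>k<n. if h \<le> k then exp (- \<mu> * real (k+1)) - exp (- \<mu> * real (k+2)) else 0) =
         exp (- \<mu> * real (h+1)) - exp (- \<mu> * real (n+1))"
  using assms
proof (induction n rule: dec_induct)
  case base
  then show ?case by simp
next
  case (step n)
  then show ?case by (simp add: algebra_simps)
qed

lemma Z_decomp:
  "Z \<mu> (Suc n) = (\<Sum>k<n. (exp (- \<mu> * real (k+1)) - exp (- \<mu> * real (k+2))) * real (card (TS k n)))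
      + exp (- \<mu> * real (n+1)) * real (card (Tall n))"
proof -
  have fin: "finite (Tall n)" using TS_finite Tall_TS by simp
  have "Z \<mu> (Suc n) = (\<Sum>t\<in>Tall n. (\<Sum>k<n. if height t \<le> k then exp (- \<mu> * real (k+1)) - exp (- \<mu> * real (k+2)) else 0)
       + exp (- \<mu> * real (n+1)))"
    unfolding Z_Tall
  proof (rule sum.cong[OF refl])
    fix t assume "t \<in> Tall n"
    then have "height t \<le> n" using height_le_edges by (auto simp: Tall_def)
    then show "exp (- \<mu> * real (Suc (height t))) = (\<Sum>k<n. if height t \<le> k then exp (- \<mu> * real (k+1)) - exp (- \<mu> * real (k+2)) else 0)
       + exp (- \<mu> * real (n+1))" using tele[of "height t" n \<mu>] by simp
  qed
  also have "\<dots> = (\<Sum>k<n. (\<Sum>t\<in>Tall n. if height t \<le> k then exp (- \<mu> * real (k+1)) - exp (- \<mu> * real (k+2)) else 0))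
       + exp (- \<mu> * real (n+1)) * real (card (Tall n))"
    by (simp add: sum.distrib sum.swap[of _ "Tall n"] mult.commute)
  also have "(\<lambda>k. (\<Sum>t\<in>Tall n. if height t \<le> k then exp (- \<mu> * real (k+1)) - exp (- \<mu> * real (k+2)) else 0))
     = (\<lambda>k. (exp (- \<mu> * real (k+1)) - exp (- \<mu> * real (k+2))) * real (card (TS k n)))"
  proof
    fix k
    have "(\<Sum>t\<in>Tall n. if height t \<le> k then exp (- \<mu> * real (k+1)) - exp (- \<mu> * real (k+2)) else 0)
      = (\<Sum>t\<in>{t\<in>Tall n. height t \<le> k}. exp (- \<mu> * real (k+1)) - exp (- \<mu> * real (k+2)))"
      by (rule sum.inter_filter[symmetric, OF fin])
    also have "{t\<in>Tall n. height t \<le> k} = TS k n" by (auto simp: Tall_def TS_def)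
    finally show "(\<Sum>t\<in>Tall n. if height t \<le> k then exp (- \<mu> * real (k+1)) - exp (- \<mu> * real (k+2)) else 0)
     = (exp (- \<mu> * real (k+1)) - exp (- \<mu> * real (k+2))) * real (card (TS k n))" by simp
  qed
  finally show ?thesis by simp
qed

lemma cos_upper4: "cos (x::real) \<le> 1 - x^2/2 + x^4/24"
proof -
  obtain t where t: "cos x = (\<Sum>m<4. cos_coeff m * x ^ m) + (cos (t + 1/2 * real 4 * pi) / fact 4) * x ^ 4"
    using Maclaurin_cos_expansion[of x 4] by blast
  have s: "(\<Sum>m<4. cos_coeff m * x ^ m) = 1 - x^2/2"
    by (simp add: cos_coeff_def eval_nat_numeral) presburger
  have c: "cos (t + 1/2 * real 4 * pi) = cos t"
    by (simp add: cos_add)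
  have "cos t * x^4 \<le> x^4" using mult_right_mono[OF cos_le_one, of "x^4" t] by simp
  then show ?thesis using t s c by (simp add: fact_numeral)
qed

lemma cos_lower2: "1 - x^2/2 \<le> cos (x::real)"
proof -
  obtain t where t: "cos x = (\<Sum>m<2. cos_coeff m * x ^ m) + (cos (t + 1/2 * real 2 * pi) / fact 2) * x ^ 2"
    using Maclaurin_cos_expansion[of x 2] by blast
  have s: "(\<Sum>m<2. cos_coeff m * x ^ m) = 1"
    by (simp add: cos_coeff_def eval_nat_numeral)
  have c: "cos (t + 1/2 * real 2 * pi) = - cos t"
    by (simp add: cos_add)
  have "cos t * x^2 \<le> x^2" using mult_right_mono[OF cos_le_one, of "x^2" t] by simp
  then show ?thesis using t s c by simp
qed

lemma sin_lower3: "0 \<le> (x::real) \<Longrightarrow> x - x^3/6 \<le> sin x"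
proof -
  assume x: "0 \<le> x"
  obtain t where t: "sin x = (\<Sum>m<3. sin_coeff m * x ^ m) + (sin (t + 1/2 * real 3 * pi) / fact 3) * x ^ 3"
    using Maclaurin_sin_expansion[of x 3] by blast
  have s: "(\<Sum>m<3. sin_coeff m * x ^ m) = x"
    by (simp add: sin_coeff_def eval_nat_numeral)
  have c: "sin (t + 1/2 * real 3 * pi) = - cos t"
  proof -
    have e: "t + 1/2 * real 3 * pi = (t + pi/2) + pi" by simp
    have "sin ((t + pi/2) + pi) = - cos t" by (simp only: sin_periodic_pi) (simp add: sin_add)
    then show ?thesis by (simp only: e)
  qed
  have "cos t * x^3 \<le> x^3" using mult_right_mono[OF cos_le_one, of "x^3" t] x by simp
  then show ?thesis using t s c by (simp add: fact_numeral)
qed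

lemma exp_neg_lower: "0 \<le> (y::real) \<Longrightarrow> 1 - y + y^2/2 - y^3/6 \<le> exp (- y)"
proof -
  assume y: "0 \<le> y"
  obtain t where t: "exp (-y) = (\<Sum>m<4. (-y) ^ m / fact m) + (exp t / fact 4) * (-y) ^ 4"
    using Maclaurin_exp_le[of "-y" 4] by blast
  have s: "(\<Sum>m<4. (-y) ^ m / fact m) = 1 - y + y^2/2 - y^3/6"
    by (simp add: eval_nat_numeral fact_numeral)
  have "0 \<le> (exp t / fact 4) * (-y) ^ 4" by simp
  then show ?thesis using t s by linarith
qed

lemma pi_sq_lt: "pi^2 < 16"
proof -
  have "pi^2 < 4^2" using pi_less_4 pi_gt_zero by (intro power_strict_mono) auto
  then show ?thesis by simp
qed

lemma cos_le_exp: assumes "0 \<le> x" "x \<le> pi/2" shows "cos x \<le> exp (- (x^2/2))"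
proof -
  define y where "y = x^2/2"
  have y0: "0 \<le> y" by (simp add: y_def)
  have "x^2 \<le> (pi/2)^2" using assms by (intro power_mono) auto
  then have y2: "y \<le> 2" using pi_sq_lt by (simp add: y_def power_divide)
  have "cos x \<le> 1 - y + y^2/6" using cos_upper4[of x] by (simp add: y_def power2_eq_square eval_nat_numeral)
  also have "\<dots> \<le> 1 - y + y^2/2 - y^3/6"
  proof -
    have "y^3 \<le> 2 * y^2" using mult_right_mono[OF y2, of "y*y"] y0 by (simp add: power3_eq_cube power2_eq_square)
    then show ?thesis by simp
  qed
  also have "\<dots> \<le> exp (-y)" using exp_neg_lower[OF y0] .
  finally show ?thesis by (simp add: y_def)
qed

lemma cos_sq_le_exp: assumes "0 \<le> x" "x \<le> pi/2" shows "cos x ^ 2 \<le> exp (- (x^2))"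
proof -
  have c0: "0 \<le> cos x" using assms by (intro cos_ge_zero) auto
  have "cos x ^ 2 \<le> exp (- (x^2/2)) ^ 2" using cos_le_exp[OF assms] c0 by (intro power_mono) auto
  also have "\<dots> = exp (- (x^2))" by (simp add: power2_eq_square mult_exp_exp)
  finally show ?thesis .
qed

lemma cos_pow_le_exp: assumes "0 \<le> x" "x \<le> pi/2" shows "cos x ^ (2*n) \<le> exp (- real n * x^2)"
proof -
  have "cos x ^ (2*n) = (cos x ^ 2) ^ n" by (simp add: power_mult)
  also have "\<dots> \<le> exp (- (x^2)) ^ n" using cos_sq_le_exp[OF assms] by (intro power_mono) auto
  also have "\<dots> = exp (- real n * x^2)" by (simp add: exp_of_nat_mult[symmetric])
  finally show ?thesis .
qed

lemma cos_pow_ge_exp: assumes "0 \<le> x" "x \<le> 1" shows "exp (- real n * x^2 - real n * x^4) \<le> cos x ^ (2*n)"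
proof -
  define y where "y = x^2/2"
  have y0: "0 \<le> y" by (simp add: y_def)
  have "x^2 \<le> 1" using assms by (simp add: power_le_one)
  then have y1: "y \<le> 1/2" by (simp add: y_def)
  have "- y - 2 * y^2 \<le> ln (1 - y)" using ln_one_minus_pos_lower_bound[OF y0 y1] .
  moreover have "0 < 1 - y" using y1 by simp
  ultimately have "exp (- y - 2 * y^2) \<le> 1 - y"
    by (metis exp_le_cancel_iff exp_ln)
  also have "1 - y \<le> cos x" using cos_lower2[of x] by (simp add: y_def)
  finally have e: "exp (- y - 2 * y^2) \<le> cos x" .
  have "exp (- real n * x^2 - real n * x^4) = exp (- y - 2 * y^2) ^ (2*n)"
    by (simp add: exp_of_nat_mult[symmetric] y_def power2_eq_square eval_nat_numeral algebra_simps)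
  also have "\<dots> \<le> cos x ^ (2*n)" using e by (intro power_mono) auto
  finally show ?thesis .
qed

definition fS :: "nat \<Rightarrow> nat \<Rightarrow> nat \<Rightarrow> real" where
  "fS n m j = sin (real j * pi / real m)^2 * cos (real j * pi / real m)^(2*n)"

lemma Sm_fS: "Sm n m = 2 / real m * (\<Sum>j=1..m-1. fS n m j)"
  by (simp add: Sm_def fS_def)

lemma fS_nonneg: "0 \<le> fS n m j"
  by (simp add: fS_def power_mult)

lemma fS_last: assumes "m \<ge> 1" shows "fS n m (m - 1) = fS n m 1"
proof -
  have e: "real (m-1) * pi / real m = pi - pi / real m" using assms
    by (simp add: of_nat_diff field_simps)
  have "cos (pi - pi / real m)^(2*n) = cos (pi / real m)^(2*n)"
    by (simp add: power_mult)
  then show ?thesis unfolding fS_def e by simp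
qed

lemma fS1_upper: assumes "m \<ge> 2" shows "fS n m 1 \<le> (pi / real m)^2 * exp (- real n * (pi / real m)^2)"
proof -
  have x0: "0 \<le> pi / real m" by simp
  have x2: "pi / real m \<le> pi / 2" using assms by (intro divide_left_mono) auto
  have "sin (pi / real m)^2 \<le> (pi / real m)^2"
  proof -
    have "pi / real m \<le> pi" using x2 pi_gt_zero by linarith
    then show ?thesis using sin_x_le_x[OF x0] sin_ge_zero[of "pi / real m"] by (intro power_mono) auto
  qed
  moreover have "cos (pi / real m)^(2*n) \<le> exp (- real n * (pi / real m)^2)"
    using cos_pow_le_exp[OF x0 x2] .
  ultimately show ?thesis unfolding fS_def
    by (intro mult_mono) (auto simp: power_mult)
qed

lemma fS_mid_upper: assumes "m \<ge> 4" "2 \<le> j" "j \<le> m - 2"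
  shows "fS n m j \<le> exp (- real n * (2 * pi / real m)^2)"
proof -
  define y where "y = 2 * pi / real m"
  define x where "x = real j * pi / real m"
  have y0: "0 \<le> y" by (simp add: y_def)
  have y2: "y \<le> pi / 2" using assms(1) by (simp add: y_def field_simps)
  have xy: "y \<le> x" using assms(2) by (simp add: x_def y_def divide_right_mono)
  have "real j \<le> real m - 2" using assms by linarith
  then have "real j * pi \<le> (real m - 2) * pi" by (intro mult_right_mono) auto
  then have xy2: "x \<le> pi - y" using assms(1) by (simp add: x_def y_def field_simps)
  have cx: "cos x ^ 2 \<le> cos y ^ 2"
  proof (cases "x \<le> pi/2")
    case True
    have "cos x \<le> cos y" using xy True y0 by (intro cos_monotone_0_pi_le) auto
    moreover have "0 \<le> cos x" using True xy y0 by (intro cos_ge_zero) auto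
    ultimately show ?thesis by (intro power_mono) auto
  next
    case False
    have "cos x = - cos (pi - x)" by simp
    moreover have "cos (pi - x) \<le> cos y" using xy2 False y0 by (intro cos_monotone_0_pi_le) auto
    moreover have "0 \<le> cos (pi - x)" using False xy2 y0 by (intro cos_ge_zero) auto
    ultimately have "(- cos x)^2 \<le> cos y ^ 2" by (intro power_mono) auto
    then show ?thesis by simp
  qed
  have "fS n m j = sin x ^ 2 * (cos x ^ 2) ^ n" by (simp add: fS_def x_def power_mult)
  also have "\<dots> \<le> 1 * (cos y ^ 2) ^ n"
  proof -
    have "(cos x ^ 2) ^ n \<le> (cos y ^ 2) ^ n" using cx by (rule power_mono) simp
    moreover have "sin x ^ 2 \<le> 1" by (simp add: abs_square_le_1)
    ultimately show ?thesis by (intro mult_mono) auto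
  qed
  also have "\<dots> = cos y ^ (2*n)" by (simp add: power_mult)
  also have "\<dots> \<le> exp (- real n * y^2)" by (rule cos_pow_le_exp[OF y0 y2])
  finally show ?thesis by (simp add: y_def)
qed

lemma Sm_upper: assumes "m \<ge> 2"
  shows "Sm n m \<le> 4 * pi^2 / real m^3 * exp (- real n * (pi / real m)^2) + 2 * exp (- real n * (2 * pi / real m)^2)"
proof -
  define E1 where "E1 = exp (- real n * (pi / real m)^2)"
  define E4 where "E4 = exp (- real n * (2 * pi / real m)^2)"
  have m0: "real m > 0" using assms by simp
  have f1: "fS n m 1 \<le> (pi / real m)^2 * E1" using fS1_upper[OF assms] by (simp add: E1_def)
  have key: "4 * pi^2 / real m^3 * E1 = 2 / real m * (2 * ((pi / real m)^2 * E1))"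
    using m0 by (simp add: field_simps power2_eq_square power3_eq_cube)
  have E4p: "0 \<le> E4" by (simp add: E4_def)
  show ?thesis
  proof (cases "m = 2")
    case True
    have "Sm n m = fS n m 1" using True by (simp add: Sm_fS)
    also have "\<dots> \<le> 2 / real m * (2 * ((pi / real m)^2 * E1))" using f1 True fS_nonneg[of n m 1]
      by (simp add: E1_def)
    finally have "Sm n m \<le> 4 * pi^2 / real m^3 * E1" using key by simp
    then have "Sm n m \<le> 4 * pi^2 / real m^3 * E1 + 2 * E4" using E4p by linarith
    then show ?thesis by (simp add: E1_def E4_def)
  next
    case False
    then have m3: "m \<ge> 3" using assms by simp
    have set: "{1..m-1} = insert 1 (insert (m-1) {2..m-2})" using m3 by auto
    have "(\<Sum>j=1..m-1. fS n m j) = fS n m 1 + (fS n m (m-1) + (\<Sum>j=2..m-2. fS n m j))"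
      unfolding set using m3 by (subst sum.insert; auto)+
    also have "\<dots> = 2 * fS n m 1 + (\<Sum>j=2..m-2. fS n m j)" using fS_last[of m n] m3 by simp
    also have "(\<Sum>j=2..m-2. fS n m j) \<le> (\<Sum>j=2..m-2. E4)"
    proof (rule sum_mono)
      fix j assume j: "j \<in> {2..m-2}"
      then have "m \<ge> 4" by auto
      then show "fS n m j \<le> E4" using fS_mid_upper[of m j n] j by (auto simp: E4_def)
    qed
    also have "(\<Sum>j=2..m-2. E4) \<le> real m * E4" using E4p by (simp add: mult_right_mono)
    finally have "(\<Sum>j=1..m-1. fS n m j) \<le> 2 * ((pi / real m)^2 * E1) + real m * E4" using f1 by linarith
    then have "Sm n m \<le> 2 / real m * (2 * ((pi / real m)^2 * E1) + real m * E4)"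
      unfolding Sm_fS using m0 by (intro mult_left_mono) auto
    also have "\<dots> = 4 * pi^2 / real m^3 * E1 + 2 * E4" using key m0 by (simp add: field_simps)
    finally show ?thesis by (simp add: E1_def E4_def)
  qed
qed

lemma Sm_lower: assumes "m \<ge> 4"
  shows "4 / real m * ((pi / real m)^2 * (1 - (pi / real m)^2 / 6)^2 * exp (- real n * (pi / real m)^2 - real n * (pi / real m)^4)) \<le> Sm n m"
proof -
  define x where "x = pi / real m"
  have m0: "real m > 0" using assms by simp
  have x0: "0 \<le> x" by (simp add: x_def)
  have x1: "x \<le> 1"
  proof -
    have "pi \<le> real m" using pi_less_4 assms by linarith
    then show ?thesis using m0 by (simp add: x_def)
  qed
  have "x^2 \<le> 1" using x0 x1 by (simp add: power_le_one)
  then have s1: "0 \<le> x * (1 - x^2/6)" using x0 by simp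
  have "x * (1 - x^2/6) \<le> sin x" using sin_lower3[OF x0] by (simp add: algebra_simps power3_eq_cube power2_eq_square)
  then have sinb: "x^2 * (1 - x^2/6)^2 \<le> sin x ^ 2" using s1 by (metis power_mono power_mult_distrib)
  have cosb: "exp (- real n * x^2 - real n * x^4) \<le> cos x ^ (2*n)" by (rule cos_pow_ge_exp[OF x0 x1])
  have A: "x^2 * (1 - x^2/6)^2 * exp (- real n * x^2 - real n * x^4) \<le> fS n m 1"
    unfolding fS_def using sinb cosb by (simp add: x_def) (intro mult_mono; simp)
  have set: "{1..m-1} = insert 1 (insert (m-1) {2..m-2})" using assms by auto
  have "(\<Sum>j=1..m-1. fS n m j) = fS n m 1 + (fS n m (m-1) + (\<Sum>j=2..m-2. fS n m j))"
    unfolding set using assms by (subst sum.insert; auto)+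
  also have "\<dots> = 2 * fS n m 1 + (\<Sum>j=2..m-2. fS n m j)" using fS_last[of m n] assms by simp
  finally have "2 * fS n m 1 \<le> (\<Sum>j=1..m-1. fS n m j)" using fS_nonneg by (simp add: sum_nonneg)
  then have "2 / real m * (2 * fS n m 1) \<le> Sm n m" unfolding Sm_fS using m0 by (intro mult_left_mono) auto
  moreover have "4 / real m * (x^2 * (1 - x^2/6)^2 * exp (- real n * x^2 - real n * x^4)) \<le> 4 / real m * fS n m 1"
    using A m0 by (intro mult_left_mono) auto
  ultimately show ?thesis unfolding x_def[symmetric] by simp
qed

lemma gauss_half: "((\<lambda>x::real. exp (- (x^2))) has_integral (sqrt pi / 2)) {0..}"
proof -
  have hb: "has_bochner_integral lborel (\<lambda>x::real. indicator {0..} x *\<^sub>R exp (- x\<^sup>2)) (sqrt pi / 2)"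
    by (rule gaussian_moment_0)
  then have "integrable lborel (\<lambda>x::real. indicator {0..} x *\<^sub>R exp (- x\<^sup>2))"
    and "integral\<^sup>L lborel (\<lambda>x::real. indicator {0..} x *\<^sub>R exp (- x\<^sup>2)) = sqrt pi / 2"
    using has_bochner_integral_iff by blast+
  then have "((\<lambda>x::real. indicator {0..} x *\<^sub>R exp (- x\<^sup>2)) has_integral (sqrt pi / 2)) UNIV"
    using has_integral_integral_lborel by metis
  then have "((\<lambda>x::real. if x \<in> {0..} then exp (- x\<^sup>2) else 0) has_integral (sqrt pi / 2)) UNIV"
    by (rule has_integral_eq[rotated]) (simp add: indicator_def)
  then show ?thesis by (subst has_integral_restrict_UNIV[symmetric]) simp
qed

abbreviation gh :: "real \<Rightarrow> real" where "gh x \<equiv> exp (- (x^2))"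

lemma gh_mono: "0 \<le> x \<Longrightarrow> x \<le> y \<Longrightarrow> gh y \<le> gh x"
  by (simp add: power_mono)

lemma gh_le1: "gh x \<le> 1" by simp

lemma gh_cont: "continuous_on S gh" by (intro continuous_intros)

lemma gh_int: "gh integrable_on {a..b}"
  by (intro integrable_continuous_interval gh_cont)

lemma gauss_trunc:
  assumes D: "D > 0"
  shows "sqrt pi / 2 - exp (- (D^2)) / (2 * D) \<le> integral {0..D} gh"
proof -
  define I where "I = integral {0..D} gh"
  define k where "k x = (if x \<le> D then gh x else exp (D^2) * exp (- (2*D) * x))" for x
  have hI: "(gh has_integral I) {0..D}" unfolding I_def using gh_int by (rule integrable_integral)
  have kI: "(k has_integral I) {0..D}"
    by (rule has_integral_eq[OF _ hI]) (simp add: k_def)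
  have e2: "((\<lambda>x. exp (- (2*D) * x)) has_integral exp (- (2*D) * D) / (2*D)) {D..}"
    using has_integral_exp_minus_to_infinity[of "2*D" D] D by simp
  have kT: "(k has_integral (exp (D^2) * (exp (- (2*D) * D) / (2*D)))) {D..}"
  proof (rule has_integral_eq[OF _ has_integral_mult_right[OF e2]])
    fix x :: real assume x: "x \<in> {D..}"
    show "exp (D^2) * exp (- (2*D) * x) = k x"
    proof (cases "x = D")
      case True
      have "exp (D^2) * exp (- (2*D) * D) = exp (D^2 + - (2*D) * D)" by (rule exp_add[symmetric])
      also have "D^2 + - (2*D) * D = - (D^2)" by (simp add: power2_eq_square)
      finally show ?thesis using True by (simp add: k_def)
    next
      case False then show ?thesis using x by (simp add: k_def)
    qed
  qed
  have T: "exp (D^2) * (exp (- (2*D) * D) / (2*D)) = exp (- (D^2)) / (2 * D)"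
  proof -
    have "exp (D^2) * exp (- (2*D) * D) = exp (D^2 + - (2*D) * D)" by (rule exp_add[symmetric])
    also have "D^2 + - (2*D) * D = - (D^2)" by (simp add: power2_eq_square)
    finally show ?thesis by simp
  qed
  have neg: "negligible ({0..D} \<inter> {D..})"
  proof -
    have "{0..D} \<inter> {D..} = {D::real}" using D by auto
    then show ?thesis by simp
  qed
  have kU: "(k has_integral (I + exp (- (D^2)) / (2 * D))) ({0..D} \<union> {D..})"
    using has_integral_Un[OF kI kT neg] unfolding T .
  have U: "{0..D} \<union> {D..} = {0::real..}" using D by auto
  have le: "gh x \<le> k x" if "x \<in> {0..}" for x
  proof (cases "x \<le> D")
    case True then show ?thesis by (simp add: k_def)
  next
    case False
    have "0 \<le> (x - D)^2" by simp
    then have "- (x^2) \<le> D^2 + - (2*D) * x" by (simp add: power2_eq_square algebra_simps)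
    then have "gh x \<le> exp (D^2 + - (2*D) * x)" by simp
    also have "\<dots> = exp (D^2) * exp (- (2*D) * x)" by (rule exp_add)
    finally show ?thesis using False by (simp add: k_def)
  qed
  have "sqrt pi / 2 \<le> I + exp (- (D^2)) / (2 * D)"
    using has_integral_le[OF gauss_half kU[unfolded U]] le by blast
  then show ?thesis by (simp add: I_def)
qed

lemma gh_piece:
  assumes "0 \<le> a" "0 < d"
  shows "d * gh (a + d) \<le> integral {a..a+d} gh" and "integral {a..a+d} gh \<le> d * gh a"
proof -
  have "integral {a..a+d} (\<lambda>_. gh (a+d)) \<le> integral {a..a+d} gh"
    using assms by (intro integral_le gh_int) (auto intro: gh_mono)
  then show "d * gh (a + d) \<le> integral {a..a+d} gh" using assms by simp
  have "integral {a..a+d} gh \<le> integral {a..a+d} (\<lambda>_. gh a)"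
    using assms by (intro integral_le gh_int) (auto intro: gh_mono)
  then show "integral {a..a+d} gh \<le> d * gh a" using assms by simp
qed

lemma rs_upper:
  assumes "0 < d" "0 \<le> s"
  shows "d * (\<Sum>k=1..K. gh (s + real k * d)) \<le> integral {s..s + real K * d} gh"
proof (induction K)
  case 0 then show ?case by simp
next
  case (Suc K)
  have split: "integral {s..s + real (Suc K) * d} gh = integral {s..s + real K * d} gh + integral {s + real K * d..s + real K * d + d} gh"
  proof -
    have e: "s + real (Suc K) * d = s + real K * d + d" by (simp add: algebra_simps)
    have "integral {s..s + real K * d} gh + integral {s + real K * d..s + real (Suc K) * d} gh = integral {s..s + real (Suc K) * d} gh"
      using Henstock_Kurzweil_Integration.integral_combine[where a=s and c="s + real K * d" and b="s + real (Suc K) * d" and f=gh] assms gh_int by simp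
    then show ?thesis unfolding e by simp
  qed
  have "d * gh (s + real K * d + d) \<le> integral {s + real K * d..s + real K * d + d} gh"
    using assms by (intro gh_piece) auto
  then show ?case using Suc split by (simp add: algebra_simps)
qed

lemma rs_lower:
  assumes "0 < d" "0 \<le> s"
  shows "integral {s..s + real K * d} gh \<le> d * (\<Sum>k<K. gh (s + real k * d))"
proof (induction K)
  case 0 then show ?case by simp
next
  case (Suc K)
  have split: "integral {s..s + real (Suc K) * d} gh = integral {s..s + real K * d} gh + integral {s + real K * d..s + real K * d + d} gh"
  proof -
    have e: "s + real (Suc K) * d = s + real K * d + d" by (simp add: algebra_simps)
    have "integral {s..s + real K * d} gh + integral {s + real K * d..s + real (Suc K) * d} gh = integral {s..s + real (Suc K) * d} gh"
      using Henstock_Kurzweil_Integration.integral_combine[where a=s and c="s + real K * d" and b="s + real (Suc K) * d" and f=gh] assms gh_int by simp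
    then show ?thesis unfolding e by simp
  qed
  have "integral {s + real K * d..s + real K * d + d} gh \<le> d * gh (s + real K * d)"
    using assms by (intro gh_piece) auto
  then show ?case using Suc split by (simp add: algebra_simps)
qed

lemma gh_int_half: "gh integrable_on {0..}" using gauss_half by blast

lemma gh_nonneg: "0 \<le> gh x" by simp

lemma gauss_rewrite: "a > 0 \<Longrightarrow> exp (- a * (s + real k)^2) = gh (sqrt a * s + real k * sqrt a)"
proof -
  assume a: "a > 0"
  have "(sqrt a * s + real k * sqrt a)^2 = (sqrt a)^2 * (s + real k)^2" by (simp add: power2_eq_square algebra_simps)
  also have "\<dots> = a * (s + real k)^2" using a by simp
  finally show ?thesis by simp
qed

lemma sqrt_pi_a: "a > 0 \<Longrightarrow> sqrt pi / 2 / sqrt a = sqrt (pi / a) / 2"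
  by (simp add: real_sqrt_divide)

lemma half_upper:
  assumes a: "a > 0" and s: "0 \<le> s"
  shows "(\<Sum>k\<le>K. exp (- a * (s + real k)^2)) \<le> 1 + sqrt (pi / a) / 2"
proof -
  define d where "d = sqrt a"
  have d: "d > 0" using a by (simp add: d_def)
  have "(\<Sum>k\<le>K. exp (- a * (s + real k)^2)) = (\<Sum>k\<le>K. gh (d * s + real k * d))"
    using gauss_rewrite[OF a] by (simp add: d_def)
  also have "\<dots> = gh (d * s) + (\<Sum>k=1..K. gh (d * s + real k * d))"
  proof -
    have "{..K} = insert 0 {1..K}" by auto
    then show ?thesis by simp
  qed
  also have "(\<Sum>k=1..K. gh (d * s + real k * d)) \<le> integral {d * s .. d * s + real K * d} gh / d"
    using rs_upper[OF d, of "d * s" K] d s by (simp add: field_simps)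
  also have "integral {d * s .. d * s + real K * d} gh \<le> integral {0..} gh"
    using d s by (intro integral_subset_le gh_int gh_int_half) auto
  also have "integral {0..} gh = sqrt pi / 2" using gauss_half by (rule integral_unique)
  finally have "(\<Sum>k\<le>K. exp (- a * (s + real k)^2)) \<le> gh (d * s) + sqrt pi / 2 / d"
    using d by (simp add: divide_right_mono)
  then have "(\<Sum>k\<le>K. exp (- a * (s + real k)^2)) \<le> 1 + sqrt pi / 2 / d"
    using gh_le1[of "d * s"] by linarith
  then show ?thesis using sqrt_pi_a[OF a] by (simp add: d_def)
qed

lemma half_lower:
  assumes a: "a > 0" and s: "0 \<le> s" "s \<le> 1" and w: "w > 0" "w \<le> s + real K + 1"
  shows "sqrt (pi / a) / 2 - exp (- a * w^2) / (2 * a * w) - 1 \<le> (\<Sum>k\<le>K. exp (- a * (s + real k)^2))"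
proof -
  define d where "d = sqrt a"
  have d: "d > 0" using a by (simp add: d_def)
  have dd: "d * d = a" using a by (simp add: d_def)
  have eqS: "(\<Sum>k\<le>K. exp (- a * (s + real k)^2)) = (\<Sum>k<Suc K. gh (d * s + real k * d))"
    using gauss_rewrite[OF a] by (simp add: d_def lessThan_Suc_atMost)
  have "integral {d * s .. d * s + real (Suc K) * d} gh \<le> d * (\<Sum>k<Suc K. gh (d * s + real k * d))"
    using rs_lower[OF d, of "d * s" "Suc K"] d s by simp
  moreover have "integral {0..d * s + real (Suc K) * d} gh = integral {0..d * s} gh + integral {d * s .. d * s + real (Suc K) * d} gh"
    using Henstock_Kurzweil_Integration.integral_combine[where a=0 and c="d * s" and b="d * s + real (Suc K) * d" and f=gh] d s gh_int
    by simp
  moreover have "integral {0..d * s} gh \<le> d"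
  proof -
    have "integral {0..d * s} gh \<le> integral {0..d * s} (\<lambda>_. 1)" by (intro integral_le gh_int) auto
    also have "\<dots> = d * s" using d s by simp
    also have "\<dots> \<le> d" using d s by (simp add: mult_left_le)
    finally show ?thesis .
  qed
  moreover have "integral {0..d * w} gh \<le> integral {0..d * s + real (Suc K) * d} gh"
  proof -
    have "d * w \<le> d * (s + real K + 1)" using d w by simp
    then have "d * w \<le> d * s + real (Suc K) * d" by (simp add: algebra_simps)
    then show ?thesis by (intro integral_subset_le gh_int) auto
  qed
  moreover have "sqrt pi / 2 - exp (- ((d * w)^2)) / (2 * (d * w)) \<le> integral {0..d * w} gh"
    using gauss_trunc[of "d * w"] d w by simp
  ultimately have "sqrt pi / 2 - exp (- ((d * w)^2)) / (2 * (d * w)) - d \<le> d * (\<Sum>k\<le>K. exp (- a * (s + real k)^2))"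
    unfolding eqS by linarith
  then have "(sqrt pi / 2 - exp (- ((d * w)^2)) / (2 * (d * w)) - d) / d \<le> (\<Sum>k\<le>K. exp (- a * (s + real k)^2))"
    using d by (simp add: divide_le_eq mult.commute)
  moreover have "(sqrt pi / 2 - exp (- ((d * w)^2)) / (2 * (d * w)) - d) / d = sqrt (pi / a) / 2 - exp (- a * w^2) / (2 * a * w) - 1"
  proof -
    have e1: "(d * w)^2 = a * w^2" using dd by (simp add: power2_eq_square algebra_simps)
    have e2: "exp (- (a * w^2)) / (2 * (d * w)) / d = exp (- a * w^2) / (2 * a * w)"
      using dd d by (simp add: field_simps)
    have e3: "sqrt pi / 2 / d = sqrt (pi / a) / 2" using sqrt_pi_a[OF a] by (simp add: d_def)
    have "(sqrt pi / 2 - exp (- ((d * w)^2)) / (2 * (d * w)) - d) / d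
        = sqrt pi / 2 / d - exp (- ((d * w)^2)) / (2 * (d * w)) / d - 1"
      using d by (simp add: diff_divide_distrib)
    also have "\<dots> = sqrt (pi / a) / 2 - exp (- a * w^2) / (2 * a * w) - 1"
      unfolding e1 e3 using e2 by simp
    finally show ?thesis .
  qed
  ultimately show ?thesis by simp
qed

lemma window_split:
  fixes c w :: real
  assumes w: "w \<ge> 1" and c: "c \<ge> w + 1"
  defines "p \<equiv> nat \<lceil>c\<rceil>" and "P \<equiv> nat \<lfloor>c + w\<rfloor>" and "l \<equiv> nat \<lceil>c - w\<rceil>"
  shows "{m::nat. \<bar>real m - c\<bar> \<le> w} = {p..P} \<union> {l..p - 1}"
    and "{p..P} \<inter> {l..p - 1} = {}"
    and "real p - c \<ge> 0" "real p - c < 1" "w \<le> (real p - c) + real (P - p) + 1" "p \<le> P"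
    and "c - real (p - 1) > 0" "c - real (p - 1) \<le> 1" "w \<le> (c - real (p - 1)) + real (p - 1 - l) + 1" "l \<le> p - 1"
proof -
  have c0: "c > 0" using w c by linarith
  have rp: "real p = real_of_int \<lceil>c\<rceil>" using c0 by (simp add: p_def)
  have rP: "real P = real_of_int \<lfloor>c + w\<rfloor>" using c0 w by (simp add: P_def)
  have rl: "real l = real_of_int \<lceil>c - w\<rceil>" using c w by (simp add: l_def)
  have p1: "c \<le> real p" "real p < c + 1" using rp ceiling_correct[of c] by linarith+
  have P1: "real P \<le> c + w" "c + w < real P + 1" using rP floor_correct[of "c+w"] by linarith+
  have l1: "c - w \<le> real l" "real l < c - w + 1" using rl ceiling_correct[of "c - w"] by linarith+
  have pP: "p \<le> P"
  proof -
    have "real p < real P + 1" using p1 P1 w by linarith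
    then show ?thesis by linarith
  qed
  have p1': "p \<ge> 1" using p1 c0 by (cases p) auto
  have rq: "real (p - 1) = real p - 1" using p1' by (simp add: of_nat_diff)
  have lq: "l \<le> p - 1"
  proof -
    have "real l < real p" using l1 p1 w by linarith
    then show ?thesis by linarith
  qed
  show "{m::nat. \<bar>real m - c\<bar> \<le> w} = {p..P} \<union> {l..p - 1}"
  proof (intro set_eqI iffI)
    fix m assume "m \<in> {m::nat. \<bar>real m - c\<bar> \<le> w}"
    then have m: "c - w \<le> real m" "real m \<le> c + w" by auto
    show "m \<in> {p..P} \<union> {l..p - 1}"
    proof (cases "c \<le> real m")
      case True
      have "real p \<le> real m"
      proof -
        have "\<lceil>c\<rceil> \<le> int m" using True by (simp add: ceiling_le_iff)
        then show ?thesis using rp by linarith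
      qed
      moreover have "real m \<le> real P"
      proof -
        have "int m \<le> \<lfloor>c + w\<rfloor>" using m by (simp add: le_floor_iff)
        then show ?thesis using rP by linarith
      qed
      ultimately show ?thesis by auto
    next
      case False
      have "real l \<le> real m"
      proof -
        have "\<lceil>c - w\<rceil> \<le> int m" using m by (simp add: ceiling_le_iff)
        then show ?thesis using rl by linarith
      qed
      moreover have "real m < real p" using False p1 by linarith
      ultimately show ?thesis by auto
    qed
  next
    fix m assume "m \<in> {p..P} \<union> {l..p - 1}"
    then have "real m \<in> {real p..real P} \<or> real m \<in> {real l..real p - 1}"
      using rq by (auto simp del: of_nat_diff)
    then show "m \<in> {m::nat. \<bar>real m - c\<bar> \<le> w}" using p1 P1 l1 w by auto
  qed
  show "{p..P} \<inter> {l..p - 1} = {}" using p1' by auto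
  show "real p - c \<ge> 0" "real p - c < 1" using p1 by auto
  show "w \<le> (real p - c) + real (P - p) + 1" using pP P1 by (simp add: of_nat_diff)
  show "p \<le> P" by (rule pP)
  show "c - real (p - 1) > 0" "c - real (p - 1) \<le> 1" using rq p1 by auto
  show "w \<le> (c - real (p - 1)) + real (p - 1 - l) + 1" using lq rq l1 by (simp add: of_nat_diff)
  show "l \<le> p - 1" by (rule lq)
qed


lemma window_bounds:
  fixes c w a :: real
  assumes a: "a > 0" and w: "w \<ge> 1" and c: "c \<ge> w + 1"
  shows "finite {m::nat. \<bar>real m - c\<bar> \<le> w}"
    and "(\<Sum>m\<in>{m::nat. \<bar>real m - c\<bar> \<le> w}. exp (- a * (real m - c)^2)) \<le> sqrt (pi / a) + 2"
    and "sqrt (pi / a) - exp (- a * w^2) / (a * w) - 2 \<le> (\<Sum>m\<in>{m::nat. \<bar>real m - c\<bar> \<le> w}. exp (- a * (real m - c)^2))"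
proof -
  define p where "p = nat \<lceil>c\<rceil>"
  define P where "P = nat \<lfloor>c + w\<rfloor>"
  define l where "l = nat \<lceil>c - w\<rceil>"
  note ws = window_split[OF w c, folded p_def P_def l_def]
  define f where "f m = exp (- a * (real m - c)^2)" for m :: nat
  define s where "s = real p - c"
  define s' where "s' = c - real (p - 1)"
  show "finite {m::nat. \<bar>real m - c\<bar> \<le> w}" unfolding ws(1) by simp
  have sumW: "(\<Sum>m\<in>{m::nat. \<bar>real m - c\<bar> \<le> w}. f m) = (\<Sum>m\<in>{p..P}. f m) + (\<Sum>m\<in>{l..p-1}. f m)"
    unfolding ws(1) using ws(2) by (intro sum.union_disjoint) auto
  have R: "(\<Sum>m\<in>{p..P}. f m) = (\<Sum>k\<le>P - p. exp (- a * (s + real k)^2))"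
  proof -
    have "(\<Sum>m\<in>{p..P}. f m) = (\<Sum>k\<in>{0..P - p}. f (p + k))"
      using sum.atLeastAtMost_shift_0[OF ws(6), of f] by (simp add: comp_def)
    also have "\<dots> = (\<Sum>k\<le>P - p. exp (- a * (s + real k)^2))"
      by (simp add: f_def s_def atLeast0AtMost algebra_simps)
    finally show ?thesis .
  qed
  have L: "(\<Sum>m\<in>{l..p-1}. f m) = (\<Sum>k\<le>p - 1 - l. exp (- a * (s' + real k)^2))"
  proof -
    have "(\<Sum>m\<in>{l..p-1}. f m) = (\<Sum>k\<in>{0..p - 1 - l}. f (p - 1 - k))"
      apply (rule sum.reindex_bij_witness[where i="\<lambda>k. p - 1 - k" and j="\<lambda>m. p - 1 - m"])
      using ws(10) apply auto
      apply (rule arg_cong[where f=f])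
      apply arith
      done
    also have "\<dots> = (\<Sum>k\<in>{0..p - 1 - l}. exp (- a * (s' + real k)^2))"
    proof (rule sum.cong[OF refl])
      fix k assume "k \<in> {0..p - 1 - l}"
      then have "k \<le> p - 1" by auto
      then have "real (p - 1 - k) = real (p - 1) - real k" by (simp add: of_nat_diff)
      then have "real (p - 1 - k) - c = - (s' + real k)" unfolding s'_def by linarith
      then have "(real (p - 1 - k) - c)^2 = (- (s' + real k))^2" by (simp only:)
      then have "(real (p - 1 - k) - c)^2 = (s' + real k)^2" by (simp only: power2_minus)
      then show "f (p - 1 - k) = exp (- a * (s' + real k)^2)" by (simp add: f_def)
    qed
    finally show ?thesis by (simp add: atLeast0AtMost)
  qed
  have s01: "0 \<le> s" "s \<le> 1" using ws(3,4) by (auto simp: s_def)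
  have s'01: "0 \<le> s'" "s' \<le> 1" using ws(7,8) by (auto simp: s'_def)
  have w0: "w > 0" using w by simp
  show "(\<Sum>m\<in>{m::nat. \<bar>real m - c\<bar> \<le> w}. exp (- a * (real m - c)^2)) \<le> sqrt (pi / a) + 2"
    using sumW R L half_upper[OF a s01(1), of "P - p"] half_upper[OF a s'01(1), of "p - 1 - l"]
    unfolding f_def by linarith
  have "w \<le> s + real (P - p) + 1" using ws(5) by (simp add: s_def)
  note h1 = half_lower[OF a s01 w0 this]
  have "w \<le> s' + real (p - 1 - l) + 1" using ws(9) by (simp add: s'_def)
  note h2 = half_lower[OF a s'01 w0 this]
  have "exp (- a * w^2) / (2 * a * w) + exp (- a * w^2) / (2 * a * w) = exp (- a * w^2) / (a * w)"
    by (simp add: field_simps)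
  then show "sqrt (pi / a) - exp (- a * w^2) / (a * w) - 2 \<le> (\<Sum>m\<in>{m::nat. \<bar>real m - c\<bar> \<le> w}. exp (- a * (real m - c)^2))"
    using sumW R L h1 h2 unfolding f_def by linarith
qed

lemma phi_ident:
  fixes m m0 \<mu> P :: real
  assumes m: "m > 0" and h: "\<mu> * m0^3 = 2 * P"
  shows "P / m^2 + \<mu> * m = 3/2 * \<mu> * m0 + \<mu> * (m - m0)^2 * (m0 + 2*m) / (2 * m^2)"
proof -
  have P: "P = \<mu> * m0^3 / 2" using h by simp
  show ?thesis unfolding P using m
    by (simp add: field_simps power2_eq_square power3_eq_cube)
qed

lemma phi_dev_in:
  fixes m m0 \<mu> w :: real
  assumes mu: "\<mu> > 0" and m0: "m0 > 0" and w: "0 \<le> w" "w \<le> m0 / 2" and d: "\<bar>m - m0\<bar> \<le> w"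
  shows "\<bar>\<mu> * (m - m0)^2 * (m0 + 2*m) / (2 * m^2) - 3 * \<mu> / (2 * m0) * (m - m0)^2\<bar> \<le> 11 * \<mu> * w^3 / m0^2"
proof -
  have mlo: "m \<ge> m0 / 2" and mhi: "m \<le> 3 * m0 / 2" using d w by auto
  have mpos: "m > 0" using mlo m0 by linarith
  define e where "e = m - m0"
  have eq: "\<mu> * (m - m0)^2 * (m0 + 2*m) / (2 * m^2) - 3 * \<mu> / (2 * m0) * (m - m0)^2
      = - (\<mu> * e^3 * (m0 + 3*m) / (2 * m^2 * m0))"
    using mpos m0 by (simp add: e_def field_simps power2_eq_square power3_eq_cube)
  have ae: "\<bar>e\<bar> \<le> w" using d by (simp add: e_def)
  have "\<bar>\<mu> * e^3 * (m0 + 3*m) / (2 * m^2 * m0)\<bar> = \<mu> * \<bar>e\<bar>^3 * (m0 + 3*m) / (2 * m^2 * m0)"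
    using mu mpos m0 by (simp add: abs_mult power_abs)
  also have "\<dots> \<le> \<mu> * w^3 * (m0 + 3*m) / (2 * m^2 * m0)"
  proof -
    have "\<bar>e\<bar>^3 \<le> w^3" using ae by (intro power_mono) auto
    then show ?thesis using mu mpos m0 by (intro divide_right_mono mult_right_mono mult_left_mono) auto
  qed
  also have "\<dots> \<le> \<mu> * w^3 * (11/2 * m0) / (2 * (m0^2/4) * m0)"
  proof -
    have n1: "m0 + 3*m \<le> 11/2 * m0" using mhi by simp
    have n2: "m0^2/4 \<le> m^2"
    proof -
      have "(m0/2)^2 \<le> m^2" using mlo m0 by (intro power_mono) auto
      then show ?thesis by (simp add: power_divide)
    qed
    have p1: "0 \<le> \<mu> * w^3" using mu w by simp
    have "\<mu> * w^3 * (m0 + 3*m) / (2 * m^2 * m0) \<le> \<mu> * w^3 * (11/2 * m0) / (2 * m^2 * m0)"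
      using n1 p1 mpos m0 by (intro divide_right_mono mult_left_mono) auto
    also have "\<dots> \<le> \<mu> * w^3 * (11/2 * m0) / (2 * (m0^2/4) * m0)"
      using n2 p1 m0 mpos by (intro divide_left_mono mult_pos_pos mult_right_mono mult_left_mono) auto
    finally show ?thesis .
  qed
  also have "\<dots> = 11 * \<mu> * w^3 / m0^2" using m0 by (simp add: field_simps power2_eq_square)
  finally show ?thesis unfolding eq by simp
qed

lemma phi_dev_out:
  fixes m m0 \<mu> w :: real
  assumes mu: "\<mu> > 0" and m0: "m0 > 0" and m: "m > 0" and w: "0 \<le> w" "w \<le> m0 / 2" and d: "\<bar>m - m0\<bar> \<ge> w"
  shows "\<mu> * w^2 / (2 * m0) \<le> \<mu> * (m - m0)^2 * (m0 + 2*m) / (2 * m^2)"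
proof (cases "m \<ge> m0")
  case True
  define e where "e = m - m0"
  have e: "e \<ge> w" "e \<ge> 0" using d True by (auto simp: e_def)
  have mm: "m = m0 + e" by (simp add: e_def)
  have "w^2 * m^2 \<le> e^2 * (m0 * (m0 + 2*m))"
  proof -
    have "(w * m)^2 \<le> (e * (3/2 * m0))^2"
    proof (intro power_mono)
      have "w * m = w * m0 + w * e" by (simp add: mm algebra_simps)
      also have "\<dots> \<le> e * m0 + e * (m0/2)"
      proof (intro add_mono)
        show "w * m0 \<le> e * m0" using e m0 by (intro mult_right_mono) auto
        have "e * w \<le> e * (m0/2)" using e w by (intro mult_left_mono) auto
        then show "w * e \<le> e * (m0/2)" by (simp add: mult.commute)
      qed
      finally show "w * m \<le> e * (3/2 * m0)" by (simp add: algebra_simps)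
      show "0 \<le> w * m" using w m by simp
    qed
    also have "\<dots> = e^2 * (9/4 * m0^2)" by (simp add: power2_eq_square)
    also have "\<dots> \<le> e^2 * (m0 * (m0 + 2*m))"
    proof -
      have "9/4 * m0^2 \<le> m0 * (m0 + 2*m)" using True m0 by (simp add: power2_eq_square algebra_simps mult_left_mono)
      then show ?thesis by (intro mult_left_mono) auto
    qed
    finally show ?thesis by (simp add: power_mult_distrib)
  qed
  then have "w^2 / m0 \<le> e^2 * (m0 + 2*m) / m^2" using m0 m by (simp add: field_simps)
  then have "\<mu> * (w^2 / m0) / 2 \<le> \<mu> * (e^2 * (m0 + 2*m) / m^2) / 2" using mu by (intro divide_right_mono mult_left_mono) auto
  then show ?thesis by (simp add: e_def field_simps)
next
  case False
  have e: "(m0 - m) \<ge> w" using d False by auto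
  have "w^2 \<le> (m - m0)^2"
  proof -
    have "w^2 \<le> (m0 - m)^2" using e w by (intro power_mono) auto
    then show ?thesis by (simp add: power2_commute)
  qed
  moreover have "1 / m0 \<le> (m0 + 2*m) / m^2"
  proof -
    have "m * m \<le> m0 * m0" using False m m0 by (intro mult_mono) auto
    moreover have "0 \<le> m0 * (2 * m)" using m m0 by simp
    ultimately have "m^2 \<le> m0 * (m0 + 2*m)" by (simp add: power2_eq_square algebra_simps)
    then show ?thesis using m0 m by (simp add: field_simps)
  qed
  ultimately have "w^2 * (1 / m0) \<le> (m - m0)^2 * ((m0 + 2*m) / m^2)"
    using m0 by (intro mult_mono) auto
  then have "\<mu> * (w^2 * (1 / m0)) / 2 \<le> \<mu> * ((m - m0)^2 * ((m0 + 2*m) / m^2)) / 2" using mu by (intro divide_right_mono mult_left_mono) auto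
  then show ?thesis by (simp add: field_simps)
qed

definition gg :: "real \<Rightarrow> real \<Rightarrow> real \<Rightarrow> real" where
  "gg \<mu> P m = 4 * pi^2 / m^3 * exp (- (P / m^2 + \<mu> * m))"

lemma gg_nonneg: "m > 0 \<Longrightarrow> 0 \<le> gg \<mu> P m" by (simp add: gg_def)

lemma gg_split:
  assumes "m > 0" "\<mu> * m0^3 = 2 * P"
  shows "gg \<mu> P m = 4 * pi^2 / m^3 * exp (- (3/2 * \<mu> * m0)) * exp (- (\<mu> * (m - m0)^2 * (m0 + 2*m) / (2 * m^2)))"
  unfolding gg_def phi_ident[OF assms] by (simp add: exp_add[symmetric] algebra_simps)

lemma sum_upper:
  fixes \<mu> m0 w P :: real and n :: nat
  assumes mu: "\<mu> > 0" and m0: "m0 > 0" and h: "\<mu> * m0^3 = 2 * P"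
    and w: "1 \<le> w" "w \<le> m0 / 2" and m02: "m0 \<ge> 2"
  shows "(\<Sum>m\<in>{2..n+1}. gg \<mu> P (real m)) \<le>
     4 * pi^2 / (m0 - w)^3 * exp (- (3/2 * \<mu> * m0)) * exp (11 * \<mu> * w^3 / m0^2) * (sqrt (pi / (3 * \<mu> / (2 * m0))) + 2)
     + real n * (pi^2 / 2) * exp (- (3/2 * \<mu> * m0)) * exp (- (\<mu> * w^2 / (2 * m0)))"
proof -
  define a where "a = 3 * \<mu> / (2 * m0)"
  have a: "a > 0" using mu m0 by (simp add: a_def)
  define W where "W = {m::nat. \<bar>real m - m0\<bar> \<le> w}"
  define E0 where "E0 = exp (- (3/2 * \<mu> * m0))"
  define C where "C = 4 * pi^2 / (m0 - w)^3 * E0 * exp (11 * \<mu> * w^3 / m0^2)"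
  have c: "m0 \<ge> w + 1" using w m02 by linarith
  note wb = window_bounds[OF a w(1) c, folded W_def]
  have mw: "m0 - w > 0" using w m0 by linarith
  have finS: "finite {2..n+1}" by simp
  have split: "(\<Sum>m\<in>{2..n+1}. gg \<mu> P (real m)) = (\<Sum>m\<in>{2..n+1} \<inter> W. gg \<mu> P (real m)) + (\<Sum>m\<in>{2..n+1} - W. gg \<mu> P (real m))"
    by (metis finS sum.Int_Diff)
  have in_bound: "gg \<mu> P (real m) \<le> C * exp (- a * (real m - m0)^2)" if mW: "m \<in> W" for m
  proof -
    have dm: "\<bar>real m - m0\<bar> \<le> w" using mW by (simp add: W_def)
    have mpos: "real m > 0" using dm mw by linarith
    have "gg \<mu> P (real m) = 4 * pi^2 / real m^3 * E0 * exp (- (\<mu> * (real m - m0)^2 * (m0 + 2*real m) / (2 * real m^2)))"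
      using gg_split[OF mpos h] by (simp add: E0_def)
    also have "\<dots> \<le> 4 * pi^2 / (m0 - w)^3 * E0 * (exp (- a * (real m - m0)^2) * exp (11 * \<mu> * w^3 / m0^2))"
    proof (intro mult_mono)
      have "(m0 - w)^3 \<le> real m ^3" using dm mw by (intro power_mono) auto
      then show "4 * pi^2 / real m^3 \<le> 4 * pi^2 / (m0 - w)^3" using mw by (intro divide_left_mono) auto
      have "\<bar>\<mu> * (real m - m0)^2 * (m0 + 2*real m) / (2 * real m^2) - a * (real m - m0)^2\<bar> \<le> 11 * \<mu> * w^3 / m0^2"
        using phi_dev_in[OF mu m0 _ w(2) dm] w by (simp add: a_def)
      then have "- (\<mu> * (real m - m0)^2 * (m0 + 2*real m) / (2 * real m^2)) \<le> - a * (real m - m0)^2 + 11 * \<mu> * w^3 / m0^2"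
        by linarith
      then show "exp (- (\<mu> * (real m - m0)^2 * (m0 + 2*real m) / (2 * real m^2))) \<le> exp (- a * (real m - m0)^2) * exp (11 * \<mu> * w^3 / m0^2)"
        by (simp add: exp_add[symmetric])
    qed (use mw in \<open>auto simp: E0_def\<close>)
    finally show ?thesis by (simp add: C_def mult_ac)
  qed
  have C0: "C \<ge> 0" using mw by (simp add: C_def E0_def)
  have "(\<Sum>m\<in>{2..n+1} \<inter> W. gg \<mu> P (real m)) \<le> (\<Sum>m\<in>W. gg \<mu> P (real m))"
  proof (rule sum_mono2[OF wb(1)])
    show "{2..n + 1} \<inter> W \<subseteq> W" by auto
    fix m assume "m \<in> W - {2..n+1} \<inter> W"
    then have "\<bar>real m - m0\<bar> \<le> w" by (simp add: W_def)
    then have "real m > 0" using mw by linarith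
    then show "0 \<le> gg \<mu> P (real m)" by (rule gg_nonneg)
  qed
  also have "\<dots> \<le> (\<Sum>m\<in>W. C * exp (- a * (real m - m0)^2))" by (intro sum_mono in_bound)
  also have "\<dots> = C * (\<Sum>m\<in>W. exp (- a * (real m - m0)^2))" by (simp add: sum_distrib_left)
  also have "\<dots> \<le> C * (sqrt (pi / a) + 2)" using wb(2) C0 by (intro mult_left_mono) auto
  finally have p1: "(\<Sum>m\<in>{2..n+1} \<inter> W. gg \<mu> P (real m)) \<le> C * (sqrt (pi / a) + 2)" .
  have out_bound: "gg \<mu> P (real m) \<le> pi^2 / 2 * E0 * exp (- (\<mu> * w^2 / (2 * m0)))" if mS: "m \<in> {2..n+1} - W" for m
  proof -
    have m2: "real m \<ge> 2" using mS by auto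
    have mpos: "real m > 0" using m2 by linarith
    have dm: "\<bar>real m - m0\<bar> \<ge> w" using mS by (auto simp: W_def)
    have "gg \<mu> P (real m) = 4 * pi^2 / real m^3 * E0 * exp (- (\<mu> * (real m - m0)^2 * (m0 + 2*real m) / (2 * real m^2)))"
      using gg_split[OF mpos h] by (simp add: E0_def)
    also have "\<dots> \<le> pi^2 / 2 * E0 * exp (- (\<mu> * w^2 / (2 * m0)))"
    proof (intro mult_mono)
      have "2^3 \<le> real m ^3" using m2 by (intro power_mono) auto
      then have "4 * pi^2 / real m^3 \<le> 4 * pi^2 / 2^3" using mpos by (intro divide_left_mono) auto
      then show "4 * pi^2 / real m^3 \<le> pi^2 / 2" by simp
      show "exp (- (\<mu> * (real m - m0)^2 * (m0 + 2*real m) / (2 * real m^2))) \<le> exp (- (\<mu> * w^2 / (2 * m0)))"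
        using phi_dev_out[OF mu m0 mpos _ w(2) dm] w by simp
    qed (auto simp: E0_def)
    finally show ?thesis .
  qed
  have "(\<Sum>m\<in>{2..n+1} - W. gg \<mu> P (real m)) \<le> (\<Sum>m\<in>{2..n+1} - W. pi^2 / 2 * E0 * exp (- (\<mu> * w^2 / (2 * m0))))"
    by (intro sum_mono out_bound)
  also have "\<dots> = real (card ({2..n+1} - W)) * (pi^2 / 2 * E0 * exp (- (\<mu> * w^2 / (2 * m0))))" by simp
  also have "\<dots> \<le> real n * (pi^2 / 2 * E0 * exp (- (\<mu> * w^2 / (2 * m0))))"
  proof (intro mult_right_mono)
    have "card ({2..n+1} - W) \<le> card {2..n+1}" by (intro card_mono) auto
    then show "real (card ({2..n+1} - W)) \<le> real n" by simp
  qed (simp add: E0_def)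
  finally have p2: "(\<Sum>m\<in>{2..n+1} - W. gg \<mu> P (real m)) \<le> real n * (pi^2 / 2 * E0 * exp (- (\<mu> * w^2 / (2 * m0))))" .
  show ?thesis using split p1 p2 by (simp add: C_def E0_def a_def mult_ac)
qed

definition glow :: "real \<Rightarrow> nat \<Rightarrow> real \<Rightarrow> real" where
  "glow \<mu> n m = gg \<mu> (pi^2 * real n) m * (1 - (pi / m)^2 / 6)^2 * exp (- real n * (pi / m)^4)"

lemma sum_lower:
  fixes \<mu> m0 w :: real and n :: nat
  assumes mu: "\<mu> > 0" and m0: "m0 > 0" and h: "\<mu> * m0^3 = 2 * (pi^2 * real n)"
    and w: "1 \<le> w" "w \<le> m0 / 2" and m08: "m0 \<ge> 8"
  shows "4 * pi^2 / (m0 + w)^3 * exp (- (3/2 * \<mu> * m0)) * exp (- (11 * \<mu> * w^3 / m0^2))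
      * (1 - 2 * pi^2 / (3 * m0^2))^2 * exp (- (16 * real n * pi^4 / m0^4))
      * (sqrt (pi / (3 * \<mu> / (2 * m0))) - exp (- (3 * \<mu> / (2 * m0)) * w^2) / ((3 * \<mu> / (2 * m0)) * w) - 2)
    \<le> (\<Sum>m\<in>{m::nat. \<bar>real m - m0\<bar> \<le> w}. glow \<mu> n (real m))"
proof -
  define a where "a = 3 * \<mu> / (2 * m0)"
  have a: "a > 0" using mu m0 by (simp add: a_def)
  define W where "W = {m::nat. \<bar>real m - m0\<bar> \<le> w}"
  define E0 where "E0 = exp (- (3/2 * \<mu> * m0))"
  define F where "F = (1 - 2 * pi^2 / (3 * m0^2))^2 * exp (- (16 * real n * pi^4 / m0^4))"
  define D where "D = 4 * pi^2 / (m0 + w)^3 * E0 * exp (- (11 * \<mu> * w^3 / m0^2)) * F"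
  have c: "m0 \<ge> w + 1" using w m08 by linarith
  note wb = window_bounds[OF a w(1) c, folded W_def]
  have mw: "m0 - w > 0" using w m0 by linarith
  have pi16: "pi^2 < 16" by (rule pi_sq_lt)
  have F1: "0 \<le> 1 - 2 * pi^2 / (3 * m0^2)"
  proof -
    have "8^2 \<le> m0^2" using m08 by (intro power_mono) auto
    then have "64 \<le> m0^2" by simp
    then have "2 * pi^2 / (3 * m0^2) \<le> 2 * 16 / (3 * 64)" using pi16 m0
      by (intro frac_le) auto
    then show ?thesis by simp
  qed
  have D0: "D \<ge> 0" using mw w m0 F1 by (simp add: D_def E0_def F_def)
  have in_bound: "D * exp (- a * (real m - m0)^2) \<le> glow \<mu> n (real m)" if mW: "m \<in> W" for m
  proof -
    have dm: "\<bar>real m - m0\<bar> \<le> w" using mW by (simp add: W_def)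
    have mlo: "real m \<ge> m0 / 2" using dm w by linarith
    have mpos: "real m > 0" using mlo m0 by linarith
    have g1: "4 * pi^2 / (m0 + w)^3 * E0 * (exp (- a * (real m - m0)^2) * exp (- (11 * \<mu> * w^3 / m0^2))) \<le> gg \<mu> (pi^2 * real n) (real m)"
    proof -
      have "4 * pi^2 / (m0 + w)^3 * E0 * (exp (- a * (real m - m0)^2) * exp (- (11 * \<mu> * w^3 / m0^2)))
          \<le> 4 * pi^2 / real m^3 * E0 * exp (- (\<mu> * (real m - m0)^2 * (m0 + 2*real m) / (2 * real m^2)))"
      proof (intro mult_mono)
        have "real m ^3 \<le> (m0 + w)^3" using dm mpos by (intro power_mono) auto
        moreover have "0 < (m0 + w)^3 * real m ^3" using mpos m0 w by simp
        ultimately show "4 * pi^2 / (m0 + w)^3 \<le> 4 * pi^2 / real m^3" by (intro divide_left_mono) auto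
        have "\<bar>\<mu> * (real m - m0)^2 * (m0 + 2*real m) / (2 * real m^2) - a * (real m - m0)^2\<bar> \<le> 11 * \<mu> * w^3 / m0^2"
          using phi_dev_in[OF mu m0 _ w(2) dm] w by (simp add: a_def)
        then have "- a * (real m - m0)^2 + - (11 * \<mu> * w^3 / m0^2) \<le> - (\<mu> * (real m - m0)^2 * (m0 + 2*real m) / (2 * real m^2))"
          by linarith
        then show "exp (- a * (real m - m0)^2) * exp (- (11 * \<mu> * w^3 / m0^2)) \<le> exp (- (\<mu> * (real m - m0)^2 * (m0 + 2*real m) / (2 * real m^2)))"
          by (simp add: exp_add[symmetric])
      qed (use mpos in \<open>auto simp: E0_def\<close>)
      also have "\<dots> = gg \<mu> (pi^2 * real n) (real m)" using gg_split[OF mpos h] by (simp add: E0_def)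
      finally show ?thesis .
    qed
    have x2: "(pi / real m)^2 \<le> 4 * pi^2 / m0^2"
    proof -
      have "pi / real m \<le> pi / (m0 / 2)" using mlo m0 by (intro divide_left_mono) auto
      then have "(pi / real m)^2 \<le> (pi / (m0 / 2))^2" using mpos by (intro power_mono) auto
      also have "\<dots> = 4 * pi^2 / m0^2" by (simp add: power_divide field_simps)
      finally show ?thesis .
    qed
    have f1: "(1 - 2 * pi^2 / (3 * m0^2))^2 \<le> (1 - (pi / real m)^2 / 6)^2"
    proof (rule power_mono)
      show "1 - 2 * pi^2 / (3 * m0^2) \<le> 1 - (pi / real m)^2 / 6" using x2 m0 by (simp add: field_simps)
    qed (rule F1)
    have f2: "exp (- (16 * real n * pi^4 / m0^4)) \<le> exp (- real n * (pi / real m)^4)"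
    proof -
      have "(pi / real m)^4 = ((pi / real m)^2)^2" by simp
      also have "\<dots> \<le> (4 * pi^2 / m0^2)^2" using x2 by (intro power_mono) auto
      also have "\<dots> = 16 * pi^4 / m0^4" by (simp add: power_divide power_mult_distrib eval_nat_numeral)
      finally have "real n * (pi / real m)^4 \<le> real n * (16 * pi^4 / m0^4)" by (intro mult_left_mono) auto
      also have "real n * (16 * pi^4 / m0^4) = 16 * real n * pi^4 / m0^4" by simp
      finally show ?thesis by simp
    qed
    have "D * exp (- a * (real m - m0)^2) = (4 * pi^2 / (m0 + w)^3 * E0 * (exp (- a * (real m - m0)^2) * exp (- (11 * \<mu> * w^3 / m0^2))))
        * (1 - 2 * pi^2 / (3 * m0^2))^2 * exp (- (16 * real n * pi^4 / m0^4))"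
      by (simp add: D_def F_def mult_ac)
    also have "\<dots> \<le> gg \<mu> (pi^2 * real n) (real m) * (1 - (pi / real m)^2 / 6)^2 * exp (- real n * (pi / real m)^4)"
      using g1 f1 f2 mw gg_nonneg[OF mpos, of \<mu> "pi^2 * real n"] by (intro mult_mono) (auto simp: E0_def)
    finally show ?thesis by (simp add: glow_def)
  qed
  have "D * (sqrt (pi / a) - exp (- a * w^2) / (a * w) - 2) \<le> D * (\<Sum>m\<in>W. exp (- a * (real m - m0)^2))"
    using wb(3) D0 by (intro mult_left_mono) auto
  also have "\<dots> = (\<Sum>m\<in>W. D * exp (- a * (real m - m0)^2))" by (simp add: sum_distrib_left)
  also have "\<dots> \<le> (\<Sum>m\<in>W. glow \<mu> n (real m))" by (intro sum_mono in_bound)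
  finally show ?thesis by (simp add: D_def E0_def F_def a_def W_def mult_ac)
qed

lemma Sm_nonneg: "0 \<le> Sm n m"
  unfolding Sm_fS by (intro mult_nonneg_nonneg sum_nonneg fS_nonneg) auto

lemma fS_le1: "fS n m j \<le> 1"
proof -
  have "sin (real j * pi / real m)^2 \<le> 1" by (simp add: abs_square_le_1)
  moreover have "cos (real j * pi / real m)^(2*n) \<le> 1"
    by (simp add: power_mult abs_square_le_1 power_le_one)
  ultimately show ?thesis unfolding fS_def by (intro mult_le_one) (auto simp: power_mult)
qed

lemma Sm_le2: "Sm n m \<le> 2"
proof (cases "m = 0")
  case True then show ?thesis by (simp add: Sm_fS)
next
  case False
  have "(\<Sum>j=1..m-1. fS n m j) \<le> (\<Sum>j=1..m-1. 1)" by (intro sum_mono fS_le1)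
  also have "\<dots> \<le> real m" by simp
  finally have "2 / real m * (\<Sum>j=1..m-1. fS n m j) \<le> 2 / real m * real m" using False by (intro mult_left_mono) auto
  then show ?thesis using False by (simp add: Sm_fS)
qed

lemma Z_sum_form:
  "Z \<mu> (Suc n) = (exp \<mu> - 1) * 4^n * (\<Sum>m\<in>{2..n+1}. exp (- \<mu> * real m) * Sm n m)
     + exp (- \<mu> * real (n+1)) * 4^n * Sm n (n+2)"
proof -
  have d: "exp (- \<mu> * real (k+1)) - exp (- \<mu> * real (k+2)) = (exp \<mu> - 1) * exp (- \<mu> * real (k+2))" for k
  proof -
    have "exp (- \<mu> * real (k+1)) = exp \<mu> * exp (- \<mu> * real (k+2))" by (simp add: exp_add[symmetric] algebra_simps)
    then show ?thesis by (simp add: algebra_simps)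
  qed
  have "(\<Sum>k<n. (exp (- \<mu> * real (k+1)) - exp (- \<mu> * real (k+2))) * real (card (TS k n)))
      = (\<Sum>k<n. (exp \<mu> - 1) * 4^n * (exp (- \<mu> * real (k+2)) * Sm n (k+2)))"
    by (intro sum.cong refl) (subst d, simp add: TS_card_Sm mult_ac)
  also have "\<dots> = (exp \<mu> - 1) * 4^n * (\<Sum>k<n. exp (- \<mu> * real (k+2)) * Sm n (k+2))"
    by (simp add: sum_distrib_left)
  also have "(\<Sum>k<n. exp (- \<mu> * real (k+2)) * Sm n (k+2)) = (\<Sum>m\<in>{2..n+1}. exp (- \<mu> * real m) * Sm n m)"
    by (rule sum.reindex_bij_witness[where i="\<lambda>m. m - 2" and j="\<lambda>k. k + 2"]) auto
  finally show ?thesis unfolding Z_decomp Tall_TS TS_card_Sm by (simp add: mult_ac)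
qed

lemma term_upper:
  assumes mu: "\<mu> > 0" and m: "m \<ge> 2" and h1: "\<mu> * m1^3 = 2 * (4 * pi^2 * real n)"
  shows "exp (- \<mu> * real m) * Sm n m \<le> gg \<mu> (pi^2 * real n) (real m) + 2 * exp (- (3/2 * \<mu> * m1))"
proof -
  have mpos: "real m > 0" using m by simp
  have "exp (- \<mu> * real m) * Sm n m \<le> exp (- \<mu> * real m) *
     (4 * pi^2 / real m^3 * exp (- real n * (pi / real m)^2) + 2 * exp (- real n * (2 * pi / real m)^2))"
    using Sm_upper[OF m, of n] by (intro mult_left_mono) auto
  also have "\<dots> = gg \<mu> (pi^2 * real n) (real m) + 2 * exp (- (4 * pi^2 * real n / real m^2 + \<mu> * real m))"
    by (simp add: gg_def algebra_simps exp_add[symmetric] power_divide power_mult_distrib)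
  also have "exp (- (4 * pi^2 * real n / real m^2 + \<mu> * real m)) \<le> exp (- (3/2 * \<mu> * m1))"
  proof -
    have "4 * pi^2 * real n / real m^2 + \<mu> * real m = 3/2 * \<mu> * m1 + \<mu> * (real m - m1)^2 * (m1 + 2 * real m) / (2 * real m^2)"
      by (rule phi_ident[OF mpos h1])
    moreover have "0 \<le> \<mu> * (real m - m1)^2 * (m1 + 2 * real m) / (2 * real m^2)"
    proof -
      have "m1 \<ge> 0"
      proof (rule ccontr)
        assume "\<not> m1 \<ge> 0"
        then have "m1^3 < 0" by (simp add: power_less_zero_eq)
        then have "\<mu> * m1^3 < 0" using mu by (simp add: mult_pos_neg)
        moreover have "0 \<le> 2 * (4 * pi^2 * real n)" by simp
        ultimately show False using h1 by linarith
      qed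
      then show ?thesis using mu mpos by simp
    qed
    ultimately show ?thesis by simp
  qed
  finally show ?thesis by simp
qed

lemma term_lower:
  assumes m: "m \<ge> 4"
  shows "glow \<mu> n (real m) \<le> exp (- \<mu> * real m) * Sm n m"
proof -
  have "glow \<mu> n (real m) = exp (- \<mu> * real m) * (4 / real m * ((pi / real m)^2 * (1 - (pi / real m)^2 / 6)^2 *
         exp (- real n * (pi / real m)^2 - real n * (pi / real m)^4)))"
    by (simp add: glow_def gg_def power_divide power3_eq_cube power2_eq_square exp_diff exp_add[symmetric] field_simps exp_minus)
  also have "\<dots> \<le> exp (- \<mu> * real m) * Sm n m" using Sm_lower[OF m, of n] by (intro mult_left_mono) auto
  finally show ?thesis .
qed

lemma cube_inj: "(x::real) \<ge> 0 \<Longrightarrow> y \<ge> 0 \<Longrightarrow> x^3 = y^3 \<Longrightarrow> x = y"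
  by (metis power_eq_imp_eq_base zero_less_numeral)

lemma powr_third_cube: "(x::real) \<ge> 0 \<Longrightarrow> (x powr (1/3))^3 = x"
  by (cases "x = 0") (simp_all add: powr_power)

lemma powr_twothird_cube: "(x::real) \<ge> 0 \<Longrightarrow> (x powr (2/3))^3 = x^2"
  by (cases "x = 0") (simp_all add: powr_power)

lemma A_ident:
  fixes \<mu> :: real assumes mu: "\<mu> > 0"
  shows "3 * (pi * \<mu> / 2) powr (2/3) = 3/2 * \<mu> * (2 * pi^2 / \<mu>) powr (1/3)"
proof (rule cube_inj)
  show "0 \<le> 3 * (pi * \<mu> / 2) powr (2/3)" by simp
  show "0 \<le> 3/2 * \<mu> * (2 * pi^2 / \<mu>) powr (1/3)" using mu by simp
  have k3: "((2 * pi^2 / \<mu>) powr (1/3))^3 = 2 * pi^2 / \<mu>" using mu by (intro powr_third_cube) simp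
  have "(3 * (pi * \<mu> / 2) powr (2/3))^3 = 27 * (pi * \<mu> / 2)^2"
    using mu by (simp add: power_mult_distrib powr_twothird_cube)
  also have "\<dots> = (3/2 * \<mu>)^3 * (2 * pi^2 / \<mu>)" using mu by (simp add: field_simps power2_eq_square power3_eq_cube)
  also have "\<dots> = (3/2 * \<mu>)^3 * ((2 * pi^2 / \<mu>) powr (1/3))^3" by (simp only: k3)
  also have "\<dots> = (3/2 * \<mu> * (2 * pi^2 / \<mu>) powr (1/3))^3" by (simp only: power_mult_distrib)
  finally show "(3 * (pi * \<mu> / 2) powr (2/3))^3 = (3/2 * \<mu> * (2 * pi^2 / \<mu>) powr (1/3))^3" .
qed

lemma B_ident:
  fixes \<mu> :: real assumes mu: "\<mu> > 0"
  shows "pi / (3 * (\<mu>^2 / (4 * pi)) powr (2/3)) = 2 * pi * (2 * pi^2 / \<mu>) powr (1/3) / (3 * \<mu>)"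
proof (rule cube_inj)
  show "0 \<le> pi / (3 * (\<mu>^2 / (4 * pi)) powr (2/3))" by simp
  show "0 \<le> 2 * pi * (2 * pi^2 / \<mu>) powr (1/3) / (3 * \<mu>)" using mu by simp
  have k3: "((2 * pi^2 / \<mu>) powr (1/3))^3 = 2 * pi^2 / \<mu>" using mu by (intro powr_third_cube) simp
  have "(pi / (3 * (\<mu>^2 / (4 * pi)) powr (2/3)))^3 = pi^3 / (27 * (\<mu>^2 / (4 * pi))^2)"
    using mu by (simp add: power_divide power_mult_distrib powr_twothird_cube)
  also have "\<dots> = (2 * pi / (3 * \<mu>))^3 * (2 * pi^2 / \<mu>)"
    using mu by (simp add: field_simps power2_eq_square power3_eq_cube)
  also have "\<dots> = (2 * pi / (3 * \<mu>))^3 * ((2 * pi^2 / \<mu>) powr (1/3))^3" by (simp only: k3)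
  also have "\<dots> = (2 * pi * (2 * pi^2 / \<mu>) powr (1/3) / (3 * \<mu>))^3"
    by (simp add: power_divide power_mult_distrib)
  finally show "(pi / (3 * (\<mu>^2 / (4 * pi)) powr (2/3)))^3 = (2 * pi * (2 * pi^2 / \<mu>) powr (1/3) / (3 * \<mu>))^3" .
qed

lemma four_third: "3/2 \<le> (4::real) powr (1/3)"
proof (rule ccontr)
  assume "\<not> 3/2 \<le> (4::real) powr (1/3)"
  then have "(4::real) powr (1/3) < 3/2" by simp
  then have "((4::real) powr (1/3))^3 < (3/2)^3" by (intro power_strict_mono) auto
  then show False using powr_third_cube[of 4] by (simp add: eval_nat_numeral)
qed

definition Upf :: "real \<Rightarrow> real \<Rightarrow> real \<Rightarrow> real \<Rightarrow> real \<Rightarrow> real \<Rightarrow> real" where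
  "Upf \<mu> \<kappa> A S y w =
     \<mu> / (2 * y) * (\<kappa> * y powr (1/3) / (\<kappa> * y powr (1/3) - w))^3
      * exp (- A * y powr (1/3)) * exp (11 * \<mu> * w^3 / (\<kappa> * y powr (1/3))^2)
      * (S * y powr (1/6) + 2)
     + y * (pi^2/8) * exp (- A * y powr (1/3)) * exp (- (\<mu> * w^2 / (2 * (\<kappa> * y powr (1/3)))))
     + y / 2 * exp (- (3/2 * A) * y powr (1/3)) + 1 / (2 * (exp \<mu> - 1)) * exp (- \<mu> * (y + 1))"

definition Lof :: "real \<Rightarrow> real \<Rightarrow> real \<Rightarrow> real \<Rightarrow> real \<Rightarrow> real \<Rightarrow> real" where
  "Lof \<mu> \<kappa> A S y w =
     \<mu> / (2 * y) * (\<kappa> * y powr (1/3) / (\<kappa> * y powr (1/3) + w))^3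
      * exp (- A * y powr (1/3)) * exp (- (11 * \<mu> * w^3 / (\<kappa> * y powr (1/3))^2))
      * (1 - 2 * pi^2 / (3 * (\<kappa> * y powr (1/3))^2))^2 * exp (- (16 * y * pi^4 / (\<kappa> * y powr (1/3))^4))
      * (S * y powr (1/6) - exp (- (3 * \<mu> / (2 * (\<kappa> * y powr (1/3)))) * w^2)
            / ((3 * \<mu> / (2 * (\<kappa> * y powr (1/3)))) * w) - 2)"

locale setting =
  fixes \<mu> \<kappa> A S :: real
  assumes mu: "\<mu> > 0" and kap: "\<kappa> > 0" and hk: "\<kappa>^3 = 2 * pi^2 / \<mu>"
    and hA: "A = 3/2 * \<mu> * \<kappa>" and hS: "S = sqrt (2 * pi * \<kappa> / (3 * \<mu>))"
begin

lemma m0_cube: "y \<ge> 0 \<Longrightarrow> \<mu> * (\<kappa> * y powr (1/3))^3 = 2 * (pi^2 * y)"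
proof -
  assume y: "y \<ge> 0"
  have "(\<kappa> * y powr (1/3))^3 = \<kappa>^3 * (y powr (1/3))^3" by (simp add: power_mult_distrib)
  also have "\<dots> = 2 * pi^2 / \<mu> * y" using y by (simp add: hk powr_third_cube)
  finally show ?thesis using mu by (simp add: field_simps)
qed

lemma pi2_frac: assumes y: "y > 0" and d: "d \<noteq> 0"
  shows "pi^2 / d^3 = \<mu> / (2 * y) * (\<kappa> * y powr (1/3) / d)^3"
proof -
  have "\<mu> * (\<kappa> * y powr (1/3))^3 = 2 * (pi^2 * y)" using m0_cube y by simp
  then have "pi^2 = \<mu> * (\<kappa> * y powr (1/3))^3 / (2 * y)" using y by (simp add: field_simps)
  then show ?thesis using d y by (simp add: power_divide)
qed

lemma sqrt_a: assumes y: "y > 0"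
  shows "sqrt (pi / (3 * \<mu> / (2 * (\<kappa> * y powr (1/3))))) = S * y powr (1/6)"
proof -
  have "pi / (3 * \<mu> / (2 * (\<kappa> * y powr (1/3)))) = 2 * pi * \<kappa> / (3 * \<mu>) * y powr (1/3)"
    using mu by (simp add: field_simps)
  moreover have "sqrt (y powr (1/3)) = y powr (1/6)"
    using powr_half_sqrt_powr[of y "1/3"] y by simp
  ultimately show ?thesis by (simp only: hS real_sqrt_mult)
qed

lemma E0_eq: "exp (- (3/2 * \<mu> * (\<kappa> * y powr (1/3)))) = exp (- A * y powr (1/3))"
  by (simp add: hA mult_ac)

lemma Z_upper_n:
  fixes n :: nat and w :: real
  assumes n: "n \<ge> 1" and w: "1 \<le> w" "w \<le> \<kappa> * real n powr (1/3) / 2" and m02: "\<kappa> * real n powr (1/3) \<ge> 2"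
  shows "Z \<mu> (Suc n) \<le> (exp \<mu> - 1) * 4^(Suc n) * Upf \<mu> \<kappa> A S (real n) w"
proof -
  define y where "y = real n"
  have y: "y > 0" using n by (simp add: y_def)
  define m0 where "m0 = \<kappa> * y powr (1/3)"
  have m0: "m0 > 0" using kap y by (simp add: m0_def)
  have h: "\<mu> * m0^3 = 2 * (pi^2 * real n)" using m0_cube[of y] y by (simp add: m0_def y_def)
  define m1 where "m1 = 4 powr (1/3) * m0"
  have h1: "\<mu> * m1^3 = 2 * (4 * pi^2 * real n)"
  proof -
    have "m1^3 = 4 * m0^3" by (simp add: m1_def power_mult_distrib powr_third_cube)
    then show ?thesis using h by simp
  qed
  define a where "a = 3 * \<mu> / (2 * m0)"
  define E0 where "E0 = exp (- (3/2 * \<mu> * m0))"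
  define E1 where "E1 = exp (- (3/2 * \<mu> * m1))"
  define U1 where "U1 = 4 * pi^2 / (m0 - w)^3 * E0 * exp (11 * \<mu> * w^3 / m0^2) * (sqrt (pi / a) + 2)"
  define U2 where "U2 = real n * (pi^2 / 2) * E0 * exp (- (\<mu> * w^2 / (2 * m0)))"
  have wm: "w \<le> m0 / 2" "m0 \<ge> 2" using w m02 by (simp_all add: m0_def y_def)
  have em: "exp \<mu> - 1 > 0" using mu by simp
  have S1: "(\<Sum>m\<in>{2..n+1}. exp (- \<mu> * real m) * Sm n m) \<le> (\<Sum>m\<in>{2..n+1}. gg \<mu> (pi^2 * real n) (real m)) + real n * (2 * E1)"
  proof -
    have "(\<Sum>m\<in>{2..n+1}. exp (- \<mu> * real m) * Sm n m) \<le> (\<Sum>m\<in>{2..n+1}. gg \<mu> (pi^2 * real n) (real m) + 2 * E1)"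
      by (intro sum_mono) (use term_upper[OF mu _ h1] in \<open>auto simp: E1_def\<close>)
    also have "\<dots> = (\<Sum>m\<in>{2..n+1}. gg \<mu> (pi^2 * real n) (real m)) + real n * (2 * E1)"
      by (simp add: sum.distrib)
    finally show ?thesis .
  qed
  have S2: "(\<Sum>m\<in>{2..n+1}. gg \<mu> (pi^2 * real n) (real m)) \<le> U1 + U2"
    using sum_upper[OF mu m0 h w(1) wm] by (simp add: U1_def U2_def E0_def a_def mult_ac)
  have "Z \<mu> (Suc n) \<le> (exp \<mu> - 1) * 4^n * (U1 + U2 + real n * (2 * E1)) + exp (- \<mu> * real (n+1)) * 4^n * 2"
  proof -
    have "(exp \<mu> - 1) * 4^n * (\<Sum>m\<in>{2..n+1}. exp (- \<mu> * real m) * Sm n m) \<le> (exp \<mu> - 1) * 4^n * (U1 + U2 + real n * (2 * E1))"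
      using S1 S2 em by (intro mult_left_mono) auto
    moreover have "exp (- \<mu> * real (n+1)) * 4^n * Sm n (n+2) \<le> exp (- \<mu> * real (n+1)) * 4^n * 2"
      using Sm_le2[of n "n+2"] by (intro mult_left_mono) auto
    ultimately show ?thesis unfolding Z_sum_form by linarith
  qed
  also have "\<dots> = (exp \<mu> - 1) * 4^(Suc n) * (U1 / 4 + U2 / 4 + real n / 2 * E1 + 1 / (2 * (exp \<mu> - 1)) * exp (- \<mu> * (y + 1)))"
    using em by (simp add: field_simps y_def)
  also have "\<dots> \<le> (exp \<mu> - 1) * 4^(Suc n) * Upf \<mu> \<kappa> A S (real n) w"
  proof (intro mult_left_mono)
    have mw: "m0 - w \<noteq> 0" using wm by linarith
    have e1: "U1 / 4 = \<mu> / (2 * y) * (m0 / (m0 - w))^3 * exp (- A * y powr (1/3)) * exp (11 * \<mu> * w^3 / m0^2) * (S * y powr (1/6) + 2)"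
    proof -
      have "U1 / 4 = pi^2 / (m0 - w)^3 * E0 * exp (11 * \<mu> * w^3 / m0^2) * (sqrt (pi / a) + 2)" by (simp add: U1_def)
      also have "pi^2 / (m0 - w)^3 = \<mu> / (2 * y) * (m0 / (m0 - w))^3" using pi2_frac[OF y mw] by (simp add: m0_def)
      also have "sqrt (pi / a) = S * y powr (1/6)" using sqrt_a[OF y] by (simp add: a_def m0_def)
      also have "E0 = exp (- A * y powr (1/3))" using E0_eq by (simp add: E0_def m0_def)
      finally show ?thesis .
    qed
    have e2: "U2 / 4 = y * (pi^2/8) * exp (- A * y powr (1/3)) * exp (- (\<mu> * w^2 / (2 * m0)))"
      using E0_eq hA by (simp add: U2_def E0_def m0_def y_def)
    have e3: "real n / 2 * E1 \<le> y / 2 * exp (- (3/2 * A) * y powr (1/3))"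
    proof -
      have "0 \<le> A" unfolding hA using mu kap by simp
      then have "0 \<le> A * y powr (1/3)" by simp
      then have "3/2 * (A * y powr (1/3)) \<le> 4 powr (1/3) * (A * y powr (1/3))"
        using four_third by (intro mult_right_mono) auto
      then have "3/2 * A * y powr (1/3) \<le> 4 powr (1/3) * (A * y powr (1/3))" by (simp add: mult_ac)
      also have "\<dots> = 3/2 * \<mu> * m1" by (simp add: m1_def m0_def hA)
      finally have "E1 \<le> exp (- (3/2 * A) * y powr (1/3))" by (simp add: E1_def)
      then show ?thesis unfolding y_def by (intro mult_left_mono) auto
    qed
    show "U1 / 4 + U2 / 4 + real n / 2 * E1 + 1 / (2 * (exp \<mu> - 1)) * exp (- \<mu> * (y + 1)) \<le> Upf \<mu> \<kappa> A S (real n) w"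
    proof -
      have U: "Upf \<mu> \<kappa> A S (real n) w = \<mu> / (2 * y) * (m0 / (m0 - w))^3 * exp (- A * y powr (1/3)) * exp (11 * \<mu> * w^3 / m0^2) * (S * y powr (1/6) + 2)
         + y * (pi^2/8) * exp (- A * y powr (1/3)) * exp (- (\<mu> * w^2 / (2 * m0)))
         + y / 2 * exp (- (3/2 * A) * y powr (1/3)) + 1 / (2 * (exp \<mu> - 1)) * exp (- \<mu> * (y + 1))"
        unfolding Upf_def m0_def y_def by (rule refl)
      show ?thesis unfolding U using e1 e2 e3 by linarith
    qed
  qed (use em in simp)
  finally show ?thesis .
qed

lemma Z_lower_n:
  fixes n :: nat and w :: real
  assumes n: "n \<ge> 1" and w: "1 \<le> w" "w \<le> \<kappa> * real n powr (1/3) / 2" and m08: "\<kappa> * real n powr (1/3) \<ge> 8"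
    and top: "3 * (\<kappa> * real n powr (1/3)) / 2 \<le> real n + 1"
  shows "(exp \<mu> - 1) * 4^(Suc n) * Lof \<mu> \<kappa> A S (real n) w \<le> Z \<mu> (Suc n)"
proof -
  define y where "y = real n"
  have y: "y > 0" using n by (simp add: y_def)
  define m0 where "m0 = \<kappa> * y powr (1/3)"
  have m0: "m0 > 0" using kap y by (simp add: m0_def)
  have h: "\<mu> * m0^3 = 2 * (pi^2 * real n)" using m0_cube[of y] y by (simp add: m0_def y_def)
  define a where "a = 3 * \<mu> / (2 * m0)"
  define E0 where "E0 = exp (- (3/2 * \<mu> * m0))"
  define W where "W = {m::nat. \<bar>real m - m0\<bar> \<le> w}"
  define L where "L = 4 * pi^2 / (m0 + w)^3 * E0 * exp (- (11 * \<mu> * w^3 / m0^2))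
      * (1 - 2 * pi^2 / (3 * m0^2))^2 * exp (- (16 * real n * pi^4 / m0^4))
      * (sqrt (pi / a) - exp (- a * w^2) / (a * w) - 2)"
  have wm: "w \<le> m0 / 2" "m0 \<ge> 8" using w m08 by (simp_all add: m0_def y_def)
  have em: "exp \<mu> - 1 > 0" using mu by simp
  have Wsub: "W \<subseteq> {2..n+1}" and W4: "\<And>m. m \<in> W \<Longrightarrow> 4 \<le> m"
  proof -
    have "4 \<le> m \<and> m \<le> n + 1" if "m \<in> W" for m
    proof -
      have d: "\<bar>real m - m0\<bar> \<le> w" using that by (simp add: W_def)
      have "real m \<ge> 4" using d wm by linarith
      moreover have "real m \<le> real n + 1" using d wm top by (simp add: m0_def y_def)
      ultimately show ?thesis by linarith
    qed
    note X = this
    show "W \<subseteq> {2..n+1}"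
    proof
      fix m assume "m \<in> W"
      with X have "4 \<le> m \<and> m \<le> n + 1" by blast
      then show "m \<in> {2..n+1}" by simp
    qed
    show "\<And>m. m \<in> W \<Longrightarrow> 4 \<le> m" using X by blast
  qed
  have "L \<le> (\<Sum>m\<in>W. glow \<mu> n (real m))"
    using sum_lower[OF mu m0 h w(1) wm] by (simp add: L_def E0_def a_def W_def)
  also have "\<dots> \<le> (\<Sum>m\<in>W. exp (- \<mu> * real m) * Sm n m)"
    by (intro sum_mono term_lower W4)
  also have "\<dots> \<le> (\<Sum>m\<in>{2..n+1}. exp (- \<mu> * real m) * Sm n m)"
    using Wsub by (intro sum_mono2) (auto intro: mult_nonneg_nonneg Sm_nonneg)
  finally have LS: "L \<le> (\<Sum>m\<in>{2..n+1}. exp (- \<mu> * real m) * Sm n m)" .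
  have "(exp \<mu> - 1) * 4^(Suc n) * Lof \<mu> \<kappa> A S (real n) w = (exp \<mu> - 1) * 4^n * L"
  proof -
    have mw: "m0 + w \<noteq> 0" using wm w by linarith
    have "L = 4 * (\<mu> / (2 * y) * (m0 / (m0 + w))^3) * exp (- A * y powr (1/3)) * exp (- (11 * \<mu> * w^3 / m0^2))
      * (1 - 2 * pi^2 / (3 * m0^2))^2 * exp (- (16 * y * pi^4 / m0^4))
      * (S * y powr (1/6) - exp (- a * w^2) / (a * w) - 2)"
    proof -
      have "4 * pi^2 / (m0 + w)^3 = 4 * (\<mu> / (2 * y) * (m0 / (m0 + w))^3)" using pi2_frac[OF y mw] by (simp add: m0_def)
      moreover have "sqrt (pi / a) = S * y powr (1/6)" using sqrt_a[OF y] by (simp add: a_def m0_def)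
      moreover have "E0 = exp (- A * y powr (1/3))" using E0_eq by (simp add: E0_def m0_def)
      ultimately show ?thesis unfolding L_def by (simp add: y_def)
    qed
    moreover have "Lof \<mu> \<kappa> A S (real n) w = \<mu> / (2 * y) * (m0 / (m0 + w))^3 * exp (- A * y powr (1/3)) * exp (- (11 * \<mu> * w^3 / m0^2))
      * (1 - 2 * pi^2 / (3 * m0^2))^2 * exp (- (16 * y * pi^4 / m0^4))
      * (S * y powr (1/6) - exp (- a * w^2) / (a * w) - 2)"
      unfolding Lof_def m0_def y_def a_def by (rule refl)
    ultimately show ?thesis by (simp add: mult_ac)
  qed
  also have "\<dots> \<le> (exp \<mu> - 1) * 4^n * (\<Sum>m\<in>{2..n+1}. exp (- \<mu> * real m) * Sm n m)"
    using LS em by (intro mult_left_mono) auto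
  also have "\<dots> \<le> Z \<mu> (Suc n)"
  proof -
    have "0 \<le> exp (- \<mu> * real (n+1)) * 4^n * Sm n (n+2)" using Sm_nonneg by simp
    then show ?thesis unfolding Z_sum_form by linarith
  qed
  finally show ?thesis .
qed

end


lemma RA_up:
  fixes S A \<kappa> \<mu> \<delta> :: real
  assumes "S > 0" "A > 0" "\<kappa> > 0" "\<mu> > 0" "\<delta> > 0" "\<delta> < 1/6"
  shows "(\<lambda>x. Upf \<mu> \<kappa> A S (x-1) ((x-1) powr (2/9 - \<delta>/3)) - \<mu> / 2 * S * exp (- A * x powr (1/3)) * x powr (-5/6))
    \<in> O(\<lambda>x. \<mu> / 2 * S * exp (- A * x powr (1/3)) * x powr (-5/6) * x powr (-\<delta>))"
proof -
  have c2: "1 / (2 * (exp \<mu> - 1)) > 0" using assms by simp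
  define c2 where "c2 = 1 / (2 * (exp \<mu> - 1))"
  have "c2 > 0" using c2 by (simp add: c2_def)
  then show ?thesis unfolding Upf_def c2_def[symmetric] using assms by real_asymp
qed

lemma RA_lo:
  fixes S A \<kappa> \<mu> \<delta> :: real
  assumes "S > 0" "A > 0" "\<kappa> > 0" "\<mu> > 0" "\<delta> > 0" "\<delta> < 1/6"
  shows "(\<lambda>x. \<mu> / 2 * S * exp (- A * x powr (1/3)) * x powr (-5/6) - Lof \<mu> \<kappa> A S (x-1) ((x-1) powr (2/9 - \<delta>/3)))
    \<in> O(\<lambda>x. \<mu> / 2 * S * exp (- A * x powr (1/3)) * x powr (-5/6) * x powr (-\<delta>))"
  unfolding Lof_def using assms by real_asymp


theorem mainTheorem11:
  fixes \<mu> \<delta> A B :: real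
  assumes "\<mu> > 0"
    and "A = 3 * (pi * \<mu> / 2) powr (2/3)"
    and "B = 3 * (\<mu>^2 / (4 * pi)) powr (2/3)"
    and "0 < \<delta>" and "\<delta> < 1/6"
  shows "(\<lambda>N. Z \<mu> N - (exp \<mu> - 1) * sqrt (pi / B) * (\<mu> / 2) * exp (- A * real N powr (1/3))
               * real N powr (-5/6) * 4 ^ N)
         \<in> O(\<lambda>N. (exp \<mu> - 1) * sqrt (pi / B) * (\<mu> / 2) * exp (- A * real N powr (1/3))
               * real N powr (-5/6) * 4 ^ N * real N powr (- \<delta>))"
proof -
  note mu = assms(1) and hA0 = assms(2) and hB = assms(3) and d0 = assms(4) and d1 = assms(5)
  define \<kappa> where "\<kappa> = (2 * pi^2 / \<mu>) powr (1/3)"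
  define S where "S = sqrt (2 * pi * \<kappa> / (3 * \<mu>))"
  have kap: "\<kappa> > 0" using mu by (simp add: \<kappa>_def)
  have hk: "\<kappa>^3 = 2 * pi^2 / \<mu>" unfolding \<kappa>_def using mu by (intro powr_third_cube) simp
  have hA: "A = 3/2 * \<mu> * \<kappa>" using A_ident[OF mu] hA0 by (simp add: \<kappa>_def)
  have SB: "sqrt (pi / B) = S" using B_ident[OF mu] hB by (simp add: S_def \<kappa>_def)
  interpret setting \<mu> \<kappa> A S using mu kap hk hA by unfold_locales (simp_all add: S_def)
  have S0: "S > 0" using mu kap by (simp add: S_def)
  have A0: "A > 0" unfolding hA using mu kap by simp
  define \<beta> where "\<beta> = 2/9 - \<delta>/3"
  define T0 where "T0 x = \<mu> / 2 * S * exp (- A * x powr (1/3)) * x powr (-5/6)" for x :: real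
  define Up where "Up x = Upf \<mu> \<kappa> A S (x-1) ((x-1) powr \<beta>)" for x :: real
  define Lo where "Lo x = Lof \<mu> \<kappa> A S (x-1) ((x-1) powr \<beta>)" for x :: real
  have R1: "(\<lambda>x. Up x - T0 x) \<in> O(\<lambda>x. T0 x * x powr (-\<delta>))"
    using RA_up[OF S0 A0 kap mu d0 d1] by (simp add: Up_def T0_def \<beta>_def)
  have R2: "(\<lambda>x. T0 x - Lo x) \<in> O(\<lambda>x. T0 x * x powr (-\<delta>))"
    using RA_lo[OF S0 A0 kap mu d0 d1] by (simp add: Lo_def T0_def \<beta>_def)
  have R1n: "(\<lambda>N. Up (real N) - T0 (real N)) \<in> O(\<lambda>N. T0 (real N) * real N powr (-\<delta>))"
    by (rule landau_o.big.compose[OF R1 filterlim_real_sequentially])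
  have R2n: "(\<lambda>N. T0 (real N) - Lo (real N)) \<in> O(\<lambda>N. T0 (real N) * real N powr (-\<delta>))"
    by (rule landau_o.big.compose[OF R2 filterlim_real_sequentially])
  obtain c1 where c1: "c1 > 0" "eventually (\<lambda>N. norm (Up (real N) - T0 (real N)) \<le> c1 * norm (T0 (real N) * real N powr (-\<delta>))) sequentially"
    using R1n by (elim landau_o.bigE)
  obtain c2 where c2: "c2 > 0" "eventually (\<lambda>N. norm (T0 (real N) - Lo (real N)) \<le> c2 * norm (T0 (real N) * real N powr (-\<delta>))) sequentially"
    using R2n by (elim landau_o.bigE)
  have be: "\<beta> > 0" using d1 by (simp add: \<beta>_def)
  have ev1: "eventually (\<lambda>x::real. 1 \<le> (x-1) powr \<beta> \<and> (x-1) powr \<beta> \<le> \<kappa> * (x-1) powr (1/3) / 2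
       \<and> 8 \<le> \<kappa> * (x-1) powr (1/3) \<and> 3 * (\<kappa> * (x-1) powr (1/3)) / 2 \<le> (x-1) + 1 \<and> 2 \<le> x) at_top"
    unfolding \<beta>_def using kap d0 d1 by (intro eventually_conj; real_asymp)
  have ev1n: "eventually (\<lambda>N. 1 \<le> (real N-1) powr \<beta> \<and> (real N-1) powr \<beta> \<le> \<kappa> * (real N-1) powr (1/3) / 2
       \<and> 8 \<le> \<kappa> * (real N-1) powr (1/3) \<and> 3 * (\<kappa> * (real N-1) powr (1/3)) / 2 \<le> (real N-1) + 1 \<and> 2 \<le> real N) sequentially"
    by (rule eventually_compose_filterlim[OF ev1 filterlim_real_sequentially])
  have sand: "eventually (\<lambda>N. (exp \<mu> - 1) * 4^N * Lo (real N) \<le> Z \<mu> N \<and> Z \<mu> N \<le> (exp \<mu> - 1) * 4^N * Up (real N)) sequentially"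
    using ev1n
  proof (rule eventually_mono)
    fix N assume H: "1 \<le> (real N-1) powr \<beta> \<and> (real N-1) powr \<beta> \<le> \<kappa> * (real N-1) powr (1/3) / 2
       \<and> 8 \<le> \<kappa> * (real N-1) powr (1/3) \<and> 3 * (\<kappa> * (real N-1) powr (1/3)) / 2 \<le> (real N-1) + 1 \<and> 2 \<le> real N"
    define n where "n = N - 1"
    have N: "N = Suc n" and n1: "n \<ge> 1" using H by (auto simp: n_def)
    have rn: "real n = real N - 1" using N by simp
    have H': "1 \<le> real n powr \<beta>" "real n powr \<beta> \<le> \<kappa> * real n powr (1/3) / 2"
       "8 \<le> \<kappa> * real n powr (1/3)" "3 * (\<kappa> * real n powr (1/3)) / 2 \<le> real n + 1"
      using H unfolding rn by auto
    have up: "Z \<mu> (Suc n) \<le> (exp \<mu> - 1) * 4^(Suc n) * Upf \<mu> \<kappa> A S (real n) (real n powr \<beta>)"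
      using Z_upper_n[OF n1 H'(1,2)] H'(3) by simp
    have lo: "(exp \<mu> - 1) * 4^(Suc n) * Lof \<mu> \<kappa> A S (real n) (real n powr \<beta>) \<le> Z \<mu> (Suc n)"
      using Z_lower_n[OF n1 H'(1,2,3,4)] .
    show "(exp \<mu> - 1) * 4^N * Lo (real N) \<le> Z \<mu> N \<and> Z \<mu> N \<le> (exp \<mu> - 1) * 4^N * Up (real N)"
      using up lo unfolding Up_def Lo_def N rn[symmetric] by simp
  qed
  show ?thesis
  proof (rule landau_o.bigI[where c = "c1 + c2"])
    show "c1 + c2 > 0" using c1 c2 by simp
    show "eventually (\<lambda>N. norm (Z \<mu> N - (exp \<mu> - 1) * sqrt (pi / B) * (\<mu> / 2) * exp (- A * real N powr (1/3))
               * real N powr (-5/6) * 4 ^ N) \<le> (c1 + c2) * norm ((exp \<mu> - 1) * sqrt (pi / B) * (\<mu> / 2) * exp (- A * real N powr (1/3))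
               * real N powr (-5/6) * 4 ^ N * real N powr (- \<delta>))) sequentially"
      using sand c1(2) c2(2)
    proof (eventually_elim)
      case (elim N)
      define F where "F = (exp \<mu> - 1) * 4^N"
      have F0: "F > 0" using mu by (simp add: F_def)
      have T: "(exp \<mu> - 1) * sqrt (pi / B) * (\<mu> / 2) * exp (- A * real N powr (1/3)) * real N powr (-5/6) * 4 ^ N = F * T0 (real N)"
        by (simp add: F_def T0_def SB mult_ac)
      have TR: "(exp \<mu> - 1) * sqrt (pi / B) * (\<mu> / 2) * exp (- A * real N powr (1/3)) * real N powr (-5/6) * 4 ^ N * real N powr (- \<delta>)
          = F * (T0 (real N) * real N powr (-\<delta>))"
        by (simp add: F_def T0_def SB mult_ac)
      define G where "G = norm (T0 (real N) * real N powr (-\<delta>))"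
      have "\<bar>Z \<mu> N - F * T0 (real N)\<bar> \<le> F * (c1 * G + c2 * G)"
      proof -
        have a1: "\<bar>Up (real N) - T0 (real N)\<bar> \<le> c1 * G" using elim(2) by (simp add: G_def)
        have a2: "\<bar>T0 (real N) - Lo (real N)\<bar> \<le> c2 * G" using elim(3) by (simp add: G_def)
        have z1: "Z \<mu> N - F * T0 (real N) \<le> F * (Up (real N) - T0 (real N))"
          using elim(1) by (simp add: F_def algebra_simps)
        have z2: "F * T0 (real N) - Z \<mu> N \<le> F * (T0 (real N) - Lo (real N))"
          using elim(1) by (simp add: F_def algebra_simps)
        have "F * (Up (real N) - T0 (real N)) \<le> F * (c1 * G + c2 * G)"
          using a1 a2 F0 c2(1) by (intro mult_left_mono) (auto simp: G_def)
        moreover have "F * (T0 (real N) - Lo (real N)) \<le> F * (c1 * G + c2 * G)"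
          using a1 a2 F0 c1(1) by (intro mult_left_mono) (auto simp: G_def)
        ultimately show ?thesis using z1 z2 by linarith
      qed
      also have "\<dots> = (c1 + c2) * norm (F * (T0 (real N) * real N powr (-\<delta>)))"
        using F0 by (simp add: G_def abs_mult algebra_simps)
      finally show ?case unfolding T TR by simp
    qed
  qed
qed

end
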